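(* Let $d,n\ge1$, $\sigma>0$, $\psi\ge 1$, let $\mathbf M$ and $\mathbf S$ be symmetric positive definite $d\times d$ matrices, $\mathbf T$ symmetric positive semi-definite, and $W=\{\mathbf w:\mathbf w^\top\mathbf M\mathbf w\le1\}$. For $\mathbf A\in\mathbb R^{d\times d}$ define the estimator $\hat{\mathbf w}_{\mathbf A}=\frac1n\mathbf M^{-1/2}\mathbf A\mathbf M^{1/2}\mathbf S^{-1}\sum_{i=1}^n\mathbf x_iy_i$ and $$J(\mathbf A)=\big\|(\mathbf I-\mathbf A)^\top\mathbf T'(\mathbf I-\mathbf A)\big\|+\frac{2\sigma^2+2\psi\|\mathbf S'\|}{n}\big\langle\mathbf T',\mathbf A(\mathbf S')^{-1}\mathbf A^\top\big\rangle .$$ Then for every $\mathbf A$, $\sup_{(P,Q)\in\mathcal P_\psi(W,\mathbf S,\mathbf T)}\mathbb E\|\hat{\mathbf w}_{\mathbf A}-\mathbf w^*\|_{\mathbf T}^2\le J(\mathbf A)$, where the expectation is over $n$ i.i.d. samples $(\mathbf x_i,y_i)\sim P$. In particular, for $\hat{\mathbf w}^{\mathrm{opt}}=\hat{\mathbf w}_{\mathbf A^\star}$ with $\mathbf A^\star\in\arg\min_{\mathbf A}J(\mathbf A)$, $$\sup_{(P,Q)\in\mathcal P_\psi(W,\mathbf S,\mathbf T)}\mathbb E\|\hat{\mathbf w}^{\mathrm{opt}}-\mathbf w^*\|_{\mathbf T}^2\le\min_{\mathbf A\in\mathbb R^{d\times d}}J(\mathbf A).$$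
   Context: Notation: $\|\mathbf w\|_{\mathbf A}^2=\mathbf w^\top\mathbf A\mathbf w$; $\|\cdot\|$ is the spectral norm; $\langle\mathbf A,\mathbf B\rangle=\operatorname{tr}(\mathbf A^\top\mathbf B)$; $\mathbf S'=\mathbf M^{-1/2}\mathbf S\mathbf M^{-1/2}$, $\mathbf T'=\mathbf M^{-1/2}\mathbf T\mathbf M^{-1/2}$. Class $\mathcal P_\psi(W,\mathbf S,\mathbf T)$: all pairs $(P,Q)$ of probability distributions of $(\mathbf x,y)\in\mathbb R^d\times\mathbb R$ with finite fourth moments such that (i) $\mathbb E_P[\mathbf x\mathbf x^\top]=\mathbf S$, $\mathbb E_Q[\mathbf x\mathbf x^\top]=\mathbf T$; (ii) the source risk $\frac12\mathbb E_P(y-\langle\mathbf w,\mathbf x\rangle)^2$ and target risk $\frac12\mathbb E_Q(y-\langle\mathbf w,\mathbf x\rangle)^2$ admit a common minimizer $\mathbf w^*\in W$; (iii) with $\epsilon=y-\mathbf x^\top\mathbf w^*$, $\mathbb E_P[\epsilon^2\mathbf x\mathbf x^\top]\preceq\sigma^2\mathbf S$; (iv) (fourth moment) for every positive semi-definite $\mathbf A$, $\mathbb E_P[\mathbf x\mathbf x^\top\mathbf A\mathbf x\mathbf x^\top]\preceq\psi\operatorname{tr}(\mathbf S\mathbf A)\mathbf S$. *)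

theory Defs
  imports "HOL-Analysis.Analysis" "HOL-Probability.Probability"
begin

definition outer :: "real^'d \<Rightarrow> real^'d \<Rightarrow> real^'d^'d" where
  "outer u v = (\<chi> i j. u $ i * v $ j)"

definition psd_mat :: "real^'d^'d \<Rightarrow> bool" where
  "psd_mat A \<longleftrightarrow> transpose A = A \<and> (\<forall>x. 0 \<le> x \<bullet> (A *v x))"

definition pd_mat :: "real^'d^'d \<Rightarrow> bool" where
  "pd_mat A \<longleftrightarrow> transpose A = A \<and> (\<forall>x. x \<noteq> 0 \<longrightarrow> 0 < x \<bullet> (A *v x))"

text \<open>Loewner order A \<preceq> B, i.e. B - A positive semi-definite (used on symmetric matrices).\<close>
definition loewner_le :: "real^'d^'d \<Rightarrow> real^'d^'d \<Rightarrow> bool" where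
  "loewner_le A B \<longleftrightarrow> (\<forall>x. x \<bullet> (A *v x) \<le> x \<bullet> (B *v x))"

definition msqrt :: "real^'d^'d \<Rightarrow> real^'d^'d" where
  "msqrt A = (THE R. psd_mat R \<and> R ** R = A)"

definition spec_norm :: "real^'d^'d \<Rightarrow> real" where
  "spec_norm A = onorm (\<lambda>v. A *v v)"

definition qform :: "real^'d^'d \<Rightarrow> real^'d \<Rightarrow> real" where
  "qform A w = w \<bullet> (A *v w)"

definition frob_inner :: "real^'d^'d \<Rightarrow> real^'d^'d \<Rightarrow> real" where
  "frob_inner A B = trace (transpose A ** B)"

definition ballW :: "real^'d^'d \<Rightarrow> (real^'d) set" where
  "ballW M = {w. w \<bullet> (M *v w) \<le> 1}"

definition risk :: "((real^'d) \<times> real) measure \<Rightarrow> real^'d \<Rightarrow> real" where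
  "risk P w = (1/2) * (\<integral>z. (snd z - fst z \<bullet> w)\<^sup>2 \<partial>P)"

definition is_distr :: "((real^'d) \<times> real) measure \<Rightarrow> bool" where
  "is_distr P \<longleftrightarrow> prob_space P \<and> sets P = sets borel \<and> integrable P (\<lambda>z. (norm z) ^ 4)"

definition in_class ::
  "real \<Rightarrow> real \<Rightarrow> real^'d^'d \<Rightarrow> real^'d^'d \<Rightarrow> real^'d^'d
   \<Rightarrow> ((real^'d) \<times> real) measure \<Rightarrow> ((real^'d) \<times> real) measure \<Rightarrow> real^'d \<Rightarrow> bool" where
  "in_class \<sigma> \<psi> M S T P Q wstar \<longleftrightarrow>
     is_distr P \<and> is_distr Q \<and>
     (\<integral>z. outer (fst z) (fst z) \<partial>P) = S \<and>
     (\<integral>z. outer (fst z) (fst z) \<partial>Q) = T \<and>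
     wstar \<in> ballW M \<and>
     (\<forall>w. risk P wstar \<le> risk P w) \<and> (\<forall>w. risk Q wstar \<le> risk Q w) \<and>
     loewner_le (\<integral>z. (snd z - fst z \<bullet> wstar)\<^sup>2 *\<^sub>R outer (fst z) (fst z) \<partial>P) (\<sigma>\<^sup>2 *\<^sub>R S) \<and>
     (\<forall>A. psd_mat A \<longrightarrow>
        loewner_le (\<integral>z. outer (fst z) (fst z) ** A ** outer (fst z) (fst z) \<partial>P)
                   ((\<psi> * trace (S ** A)) *\<^sub>R S))"

definition west :: "nat \<Rightarrow> real^'d^'d \<Rightarrow> real^'d^'d \<Rightarrow> real^'d^'d
     \<Rightarrow> (nat \<Rightarrow> (real^'d) \<times> real) \<Rightarrow> real^'d" where
  "west n M S A \<omega> = (1 / real n) *\<^sub>R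
     ((matrix_inv (msqrt M) ** A ** msqrt M ** matrix_inv S) *v (\<Sum>i<n. snd (\<omega> i) *\<^sub>R fst (\<omega> i)))"

definition Jfun :: "nat \<Rightarrow> real \<Rightarrow> real \<Rightarrow> real^'d^'d \<Rightarrow> real^'d^'d \<Rightarrow> real^'d^'d
     \<Rightarrow> real^'d^'d \<Rightarrow> real" where
  "Jfun n \<sigma> \<psi> M S T A =
     (let Mi = matrix_inv (msqrt M);
          S' = Mi ** S ** Mi;
          T' = Mi ** T ** Mi;
          IA = mat 1 - A
      in spec_norm (transpose IA ** T' ** IA)
         + (2 * \<sigma>\<^sup>2 + 2 * \<psi> * spec_norm S') / real n
           * frob_inner T' (A ** matrix_inv S' ** transpose A))"

end

theory Submission
  imports Defs
begin

lemma dot_transpose: "x \<bullet> (A *v y) = (transpose A *v x) \<bullet> (y::real^'n)"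
  by (metis dot_lmul_matrix vector_transpose_matrix transpose_transpose)

lemma sym_dot: "transpose K = K \<Longrightarrow> x \<bullet> (K *v y) = y \<bullet> (K *v (x::real^'n))"
  by (metis dot_transpose inner_commute)

lemma quad_zero:
  fixes b c :: real
  assumes "\<And>t. 0 \<le> 2*t*b + t^2*c"
  shows "b = 0"
proof (rule ccontr)
  assume b: "b \<noteq> 0"
  define d where "d = \<bar>c\<bar> + 1"
  have pos: "d > 0" unfolding d_def by simp
  define t where "t = - b / d"
  have td: "t * d = - b" unfolding t_def using pos by simp
  have "t^2*c \<le> t^2*\<bar>c\<bar>" by (simp add: mult_left_mono)
  moreover have "d^2 * (2*t*b + t^2*\<bar>c\<bar>) = b^2 * (\<bar>c\<bar> - 2*d)"
  proof -
    have "d^2 * (2*t*b + t^2*\<bar>c\<bar>) = 2*d*b*(t*d) + (t*d)^2*\<bar>c\<bar>" by (simp add: algebra_simps power2_eq_square)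
    also have "\<dots> = b^2 * (\<bar>c\<bar> - 2*d)" unfolding td by (simp add: algebra_simps power2_eq_square)
    finally show ?thesis .
  qed
  moreover have "b^2 * (\<bar>c\<bar> - 2*d) < 0"
    using b pos unfolding d_def by (intro mult_pos_neg) auto
  ultimately have "d^2 * (2*t*b + t^2*\<bar>c\<bar>) < 0" by linarith
  hence "2*t*b + t^2*\<bar>c\<bar> < 0" using pos by (simp add: mult_less_0_iff)
  hence "2*t*b + t^2*c < 0" using \<open>t^2*c \<le> t^2*\<bar>c\<bar>\<close> by linarith
  with assms[of t] show False by linarith
qed

definition eigsys :: "real^'n^'n \<Rightarrow> (real^'n) set \<Rightarrow> bool" where
  "eigsys K B \<longleftrightarrow> finite B \<and> (\<forall>v\<in>B. norm v = 1 \<and> K *v v = (v \<bullet> (K *v v)) *\<^sub>R v)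
     \<and> (\<forall>v\<in>B. \<forall>w\<in>B. v \<noteq> w \<longrightarrow> v \<bullet> w = 0)"

lemma eig_step:
  fixes K :: "real^'n^'n"
  assumes sym: "transpose K = K" and E: "eigsys K B" and c: "card B < CARD('n)"
  shows "\<exists>v. v \<notin> B \<and> eigsys K (insert v B)"
proof -
  have fin: "finite B" using E by (simp add: eigsys_def)
  define V where "V = {x::real^'n. \<forall>b\<in>B. b \<bullet> x = 0}"
  define Sph where "Sph = V \<inter> sphere 0 1"
  have indep: "independent B"
    using E by (intro pairwise_orthogonal_independent)
      (auto simp: eigsys_def pairwise_def orthogonal_def)
  have "dim (span B) = card B" using indep by (rule dim_span_eq_card_independent)
  hence "span B \<noteq> UNIV" using c by (metis DIM_cart DIM_real dim_UNIV mult.right_neutral less_irrefl)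
  then obtain a where a: "a \<noteq> 0" "span B \<subseteq> {x. a \<bullet> x = 0}"
    using span_not_univ_subset_hyperplane by blast
  have aV: "a /\<^sub>R norm a \<in> Sph"
    using a span_base[of _ B] unfolding Sph_def V_def by (auto simp: inner_commute)
  have clV: "closed V"
  proof -
    have "V = (\<Inter>b\<in>B. {x. b \<bullet> x = 0})" unfolding V_def by auto
    thus ?thesis by (auto intro!: closed_INT closed_hyperplane)
  qed
  have "compact Sph" unfolding Sph_def using clV by (simp add: closed_Int_compact)
  moreover have "Sph \<noteq> {}" using aV by auto
  moreover have "continuous_on Sph (\<lambda>x. x \<bullet> (K *v x))"
    by (intro continuous_intros linear_continuous_on matrix_vector_mul_bounded_linear)
  ultimately have "\<exists>v\<in>Sph. \<forall>y\<in>Sph. y \<bullet> (K *v y) \<le> v \<bullet> (K *v v)"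
    by (rule continuous_attains_sup)
  then obtain v where v: "v \<in> Sph" and vmax: "\<And>y. y \<in> Sph \<Longrightarrow> y \<bullet> (K *v y) \<le> v \<bullet> (K *v v)"
    by blast
  define l where "l = v \<bullet> (K *v v)"
  have vV: "v \<in> V" and nv: "norm v = 1" using v by (auto simp: Sph_def)
  have Vsub: "x \<in> V \<Longrightarrow> y \<in> V \<Longrightarrow> x + t *\<^sub>R y \<in> V" for x y t
    by (auto simp: V_def inner_add_right)
  have vv: "v \<bullet> v = 1" using nv by (simp add: norm_eq_1)
  have perp: "w \<bullet> (K *v v) = 0" if wV: "w \<in> V" and wv: "w \<bullet> v = 0" for w
  proof -
    have "0 \<le> 2*t*(- (w \<bullet> (K *v v))) + t^2*(l * (w \<bullet> w) - w \<bullet> (K *v w))" for t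
    proof -
      define x where "x = v + t *\<^sub>R w"
      have xV: "x \<in> V" unfolding x_def using vV wV Vsub by blast
      have nx2: "x \<bullet> x = 1 + t^2 * (w \<bullet> w)"
        unfolding x_def using vv wv by (simp add: inner_add_left inner_add_right inner_commute power2_eq_square)
      have "x \<bullet> x > 0" using nx2 by (simp add: add_pos_nonneg)
      hence nx: "norm x > 0" by (cases "x = 0") auto
      have "(x /\<^sub>R norm x) \<in> Sph" using xV nx unfolding Sph_def V_def
        by (auto simp: inner_scaleR_right)
      hence "(x /\<^sub>R norm x) \<bullet> (K *v (x /\<^sub>R norm x)) \<le> l" using vmax l_def by blast
      moreover have "(x /\<^sub>R norm x) \<bullet> (K *v (x /\<^sub>R norm x)) = (x \<bullet> (K *v x)) / (norm x)^2"
        using nx by (simp add: matrix_vector_mult_scaleR power2_eq_square field_simps)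
      ultimately have "(x \<bullet> (K *v x)) / (norm x)^2 \<le> l" by simp
      hence "x \<bullet> (K *v x) \<le> l * (x \<bullet> x)"
        using nx by (simp add: divide_le_eq power2_norm_eq_inner mult.commute)
      moreover have "x \<bullet> (K *v x) = l + 2*t*(w \<bullet> (K *v v)) + t^2 * (w \<bullet> (K *v w))"
        unfolding x_def l_def using sym_dot[OF sym, of v w]
        by (simp add: matrix_vector_right_distrib matrix_vector_mult_scaleR inner_add_left inner_add_right
            power2_eq_square algebra_simps)
      ultimately show ?thesis using nx2 by (simp add: algebra_simps)
    qed
    from quad_zero[OF this] show ?thesis by simp
  qed
  define r where "r = K *v v - l *\<^sub>R v"
  have rV: "r \<in> V"
  proof -
    have "b \<bullet> (K *v v) = 0" if "b \<in> B" for b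
    proof -
      have "b \<bullet> (K *v v) = v \<bullet> (K *v b)" by (rule sym_dot[OF sym])
      also have "\<dots> = (b \<bullet> (K *v b)) * (v \<bullet> b)" using E that by (metis eigsys_def inner_scaleR_right)
      also have "v \<bullet> b = 0" using vV that by (simp add: V_def inner_commute)
      finally show ?thesis by simp
    qed
    thus ?thesis using vV by (auto simp: r_def V_def inner_diff_right)
  qed
  have rv: "r \<bullet> v = 0" unfolding r_def l_def using vv by (simp add: inner_diff_left inner_diff_right inner_commute)
  have "r \<bullet> r = r \<bullet> (K *v v) - l * (r \<bullet> v)" unfolding r_def by (simp add: inner_diff_right)
  hence "r \<bullet> r = 0" using perp[OF rV rv] rv by simp
  hence r0: "K *v v = l *\<^sub>R v" unfolding r_def by simp
  have vB: "v \<notin> B" using vV vv unfolding V_def by auto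
  have "eigsys K (insert v B)"
    using E fin nv r0 vV unfolding eigsys_def l_def V_def by (auto simp: inner_commute)
  thus ?thesis using vB by blast
qed

lemma spectral_card:
  fixes K :: "real^'n^'n"
  assumes sym: "transpose K = K"
  shows "k \<le> CARD('n) \<Longrightarrow> \<exists>B. eigsys K B \<and> card B = k"
proof (induction k)
  case 0
  show ?case by (rule exI[of _ "{}"]) (simp add: eigsys_def)
next
  case (Suc k)
  then obtain B where B: "eigsys K B" "card B = k" by auto
  then obtain v where "v \<notin> B" "eigsys K (insert v B)" using eig_step[OF sym B(1)] Suc.prems by auto
  moreover have "finite B" using B by (simp add: eigsys_def)
  ultimately show ?case using B by (intro exI[of _ "insert v B"]) auto
qed

lemma onsum:
  assumes E: "eigsys K B" and w: "w \<in> B"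
  shows "w \<bullet> (\<Sum>v\<in>B. c v *\<^sub>R v) = c w"
proof -
  have fin: "finite B" using E by (simp add: eigsys_def)
  have "w \<bullet> (\<Sum>v\<in>B. c v *\<^sub>R v) = (\<Sum>v\<in>B. c v * (w \<bullet> v))" by (simp add: inner_sum_right)
  also have "\<dots> = c w * (w \<bullet> w) + (\<Sum>v\<in>B-{w}. c v * (w \<bullet> v))" by (rule sum.remove[OF fin w])
  also have "(\<Sum>v\<in>B-{w}. c v * (w \<bullet> v)) = 0"
    using E w by (intro sum.neutral) (auto simp: eigsys_def)
  also have "w \<bullet> w = 1" using E w by (simp add: eigsys_def norm_eq_1)
  finally show ?thesis by simp
qed

lemma spectral:
  fixes K :: "real^'n^'n"
  assumes sym: "transpose K = K"
  shows "\<exists>B. eigsys K B \<and> (\<forall>x. x = (\<Sum>v\<in>B. (v \<bullet> x) *\<^sub>R v))"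
proof -
  obtain B where B: "eigsys K B" "card B = CARD('n)" using spectral_card[OF sym] by blast
  have fin: "finite B" using B by (simp add: eigsys_def)
  have indep: "independent B"
    using B by (intro pairwise_orthogonal_independent)
      (auto simp: eigsys_def pairwise_def orthogonal_def)
  have "dim (span B) = DIM(real^'n)" using dim_span_eq_card_independent[OF indep] B by simp
  hence sp: "span B = UNIV" using dim_eq_full by (metis dim_span)
  have "x = (\<Sum>v\<in>B. (v \<bullet> x) *\<^sub>R v)" for x
  proof -
    have "x \<in> span B" using sp by simp
    then obtain u where u: "x = (\<Sum>v\<in>B. u v *\<^sub>R v)" using span_finite[OF fin] by blast
    have "v \<bullet> x = u v" if "v \<in> B" for v using onsum[OF B(1) that] u by simp
    hence "(\<Sum>v\<in>B. (v \<bullet> x) *\<^sub>R v) = (\<Sum>v\<in>B. u v *\<^sub>R v)" by (intro sum.cong) auto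
    thus ?thesis using u by simp
  qed
  thus ?thesis using B by blast
qed

lemma eig_apply:
  assumes sym: "transpose K = K" and E: "eigsys K B" and X: "\<forall>x. x = (\<Sum>v\<in>B. (v \<bullet> x) *\<^sub>R v)"
  shows "K *v x = (\<Sum>v\<in>B. ((v \<bullet> (K *v v)) * (v \<bullet> x)) *\<^sub>R v)"
proof -
  have "K *v x = (\<Sum>v\<in>B. (v \<bullet> (K *v x)) *\<^sub>R v)" using X by blast
  also have "\<dots> = (\<Sum>v\<in>B. ((v \<bullet> (K *v v)) * (v \<bullet> x)) *\<^sub>R v)"
  proof (intro sum.cong refl)
    fix v assume v: "v \<in> B"
    have "v \<bullet> (K *v x) = x \<bullet> (K *v v)" by (rule sym_dot[OF sym])
    also have "\<dots> = (v \<bullet> (K *v v)) * (v \<bullet> x)" using E v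
      by (metis eigsys_def inner_scaleR_right inner_commute)
    finally show "(v \<bullet> (K *v x)) *\<^sub>R v = ((v \<bullet> (K *v v)) * (v \<bullet> x)) *\<^sub>R v" by simp
  qed
  finally show ?thesis .
qed

lemma eig_quad:
  assumes sym: "transpose K = K" and E: "eigsys K B" and X: "\<forall>x. x = (\<Sum>v\<in>B. (v \<bullet> x) *\<^sub>R v)"
  shows "x \<bullet> (K *v x) = (\<Sum>v\<in>B. (v \<bullet> (K *v v)) * (v \<bullet> x)^2)"
  by (subst eig_apply[OF assms]) (simp add: inner_sum_right power2_eq_square inner_commute mult.assoc)

lemma outer_mv: "outer u w *v x = (w \<bullet> x) *\<^sub>R u"
  by (simp add: vec_eq_iff outer_def matrix_vector_mult_def inner_vec_def sum_distrib_left mult_ac)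

lemma sum_mv: "finite B \<Longrightarrow> (\<Sum>v\<in>B. f v) *v x = (\<Sum>v\<in>B. f v *v x)"
  by (induction B rule: finite_induct) (auto simp: matrix_vector_mult_add_rdistrib)

lemma transpose_add': "transpose (A + B) = transpose A + transpose (B::real^'n^'n)"
  by (simp add: vec_eq_iff transpose_def)

lemma transpose_zero': "transpose (0::real^'n^'n) = 0"
  by (simp add: vec_eq_iff transpose_def)

lemma transpose_sum: "finite B \<Longrightarrow> transpose (\<Sum>v\<in>B. f v) = (\<Sum>v\<in>B. transpose (f v :: real^'n^'n))"
  by (induction B rule: finite_induct) (auto simp: transpose_add' transpose_zero')

lemma transpose_outer: "transpose (outer u u) = outer u u"
  by (simp add: vec_eq_iff transpose_def outer_def mult.commute)

lemma psd_zero: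
  assumes R: "psd_mat R" and z: "v \<bullet> (R *v v) = 0"
  shows "R *v v = 0"
proof -
  have sym: "transpose R = R" using R by (simp add: psd_mat_def)
  have "0 \<le> 2*t*((R *v v) \<bullet> (R *v v)) + t^2*((R *v v) \<bullet> (R *v (R *v v)))" for t
  proof -
    have "0 \<le> (v + t *\<^sub>R (R *v v)) \<bullet> (R *v (v + t *\<^sub>R (R *v v)))" using R by (simp add: psd_mat_def)
    also have "\<dots> = 2*t*((R *v v) \<bullet> (R *v v)) + t^2*((R *v v) \<bullet> (R *v (R *v v)))"
      using z sym_dot[OF sym, of v "R *v v"]
      by (simp add: matrix_vector_right_distrib matrix_vector_mult_scaleR inner_add_left inner_add_right
            power2_eq_square algebra_simps)
    finally show ?thesis .
  qed
  from quad_zero[OF this] show ?thesis by simp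
qed

lemma psd_sqrt_exists:
  fixes K :: "real^'n^'n"
  assumes K: "psd_mat K"
  shows "\<exists>R. psd_mat R \<and> R ** R = K"
proof -
  have sym: "transpose K = K" using K by (simp add: psd_mat_def)
  obtain B where E: "eigsys K B" and X: "\<forall>x. x = (\<Sum>v\<in>B. (v \<bullet> x) *\<^sub>R v)"
    using spectral[OF sym] by blast
  have fin: "finite B" using E by (simp add: eigsys_def)
  define lam where "lam v = v \<bullet> (K *v v)" for v
  have lam0: "lam v \<ge> 0" for v using K by (simp add: lam_def psd_mat_def)
  define R where "R = (\<Sum>v\<in>B. sqrt (lam v) *\<^sub>R outer v v)"
  have Rx: "R *v x = (\<Sum>v\<in>B. (sqrt (lam v) * (v \<bullet> x)) *\<^sub>R v)" for x
    unfolding R_def by (simp add: sum_mv[OF fin] outer_mv scaleR_matrix_vector_assoc[symmetric])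
  have Rsym: "transpose R = R"
    unfolding R_def by (simp add: transpose_sum[OF fin] transpose_scalar transpose_outer)
  have "x \<bullet> (R *v x) \<ge> 0" for x
  proof -
    have "x \<bullet> (R *v x) = (\<Sum>v\<in>B. sqrt (lam v) * (v \<bullet> x)^2)"
      unfolding Rx by (simp add: inner_sum_right power2_eq_square inner_commute mult.assoc)
    thus ?thesis using lam0 by (auto intro!: sum_nonneg mult_nonneg_nonneg)
  qed
  hence psdR: "psd_mat R" using Rsym by (simp add: psd_mat_def)
  have "(R ** R) *v x = K *v x" for x
  proof -
    have "(R ** R) *v x = R *v (R *v x)" by (simp add: matrix_vector_mul_assoc)
    also have "\<dots> = (\<Sum>w\<in>B. (sqrt (lam w) * (w \<bullet> (R *v x))) *\<^sub>R w)" by (rule Rx)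
    also have "\<dots> = (\<Sum>w\<in>B. (lam w * (w \<bullet> x)) *\<^sub>R w)"
    proof (intro sum.cong refl)
      fix w assume w: "w \<in> B"
      have "w \<bullet> (R *v x) = sqrt (lam w) * (w \<bullet> x)" unfolding Rx by (rule onsum[OF E w])
      thus "(sqrt (lam w) * (w \<bullet> (R *v x))) *\<^sub>R w = (lam w * (w \<bullet> x)) *\<^sub>R w"
        using lam0[of w] by (simp add: mult.assoc[symmetric])
    qed
    also have "\<dots> = K *v x" unfolding lam_def by (rule eig_apply[OF sym E X, symmetric])
    finally show ?thesis .
  qed
  hence "R ** R = K" by (simp add: matrix_eq)
  thus ?thesis using psdR by blast
qed

lemma psd_sqrt_unique:
  fixes R1 R2 :: "real^'n^'n"
  assumes P1: "psd_mat R1" and P2: "psd_mat R2" and eq: "R1 ** R1 = R2 ** R2"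
  shows "R1 = R2"
proof -
  define D where "D = R1 - R2"
  define Sm where "Sm = R1 + R2"
  have s1: "transpose R1 = R1" and s2: "transpose R2 = R2" using P1 P2 by (auto simp: psd_mat_def)
  have symD: "transpose D = D" unfolding D_def using s1 s2 by (simp add: vec_eq_iff transpose_def)
  have comm: "D *v (Sm *v x) + Sm *v (D *v x) = 0" for x
  proof -
    have "D *v (Sm *v x) + Sm *v (D *v x) = 2 *\<^sub>R ((R1 ** R1) *v x - (R2 ** R2) *v x)"
      unfolding D_def Sm_def
      by (simp add: matrix_vector_mult_diff_rdistrib matrix_vector_mult_add_rdistrib
          matrix_vector_right_distrib matrix_vector_mult_diff_distrib matrix_vector_mul_assoc[symmetric]
          algebra_simps scaleR_2)
    thus ?thesis using eq by simp
  qed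
  obtain B where E: "eigsys D B" and X: "\<forall>x. x = (\<Sum>v\<in>B. (v \<bullet> x) *\<^sub>R v)"
    using spectral[OF symD] by blast
  have mu0: "v \<bullet> (D *v v) = 0" if v: "v \<in> B" for v
  proof (rule ccontr)
    define mu where "mu = v \<bullet> (D *v v)"
    assume "v \<bullet> (D *v v) \<noteq> 0"
    hence mu: "mu \<noteq> 0" by (simp add: mu_def)
    have Dv: "D *v v = mu *\<^sub>R v" using E v by (simp add: eigsys_def mu_def)
    have "0 = v \<bullet> (D *v (Sm *v v)) + v \<bullet> (Sm *v (D *v v))"
      using comm[of v] by (metis inner_add_right inner_zero_right)
    also have "v \<bullet> (D *v (Sm *v v)) = (Sm *v v) \<bullet> (D *v v)" by (rule sym_dot[OF symD])
    also have "\<dots> = mu * (v \<bullet> (Sm *v v))" unfolding Dv by (simp add: inner_commute)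
    also have "v \<bullet> (Sm *v (D *v v)) = mu * (v \<bullet> (Sm *v v))" unfolding Dv
      by (simp add: matrix_vector_mult_scaleR)
    finally have "v \<bullet> (Sm *v v) = 0" using mu by simp
    hence "v \<bullet> (R1 *v v) + v \<bullet> (R2 *v v) = 0"
      unfolding Sm_def by (simp add: matrix_vector_mult_add_rdistrib inner_add_right)
    moreover have "v \<bullet> (R1 *v v) \<ge> 0" "v \<bullet> (R2 *v v) \<ge> 0" using P1 P2 by (auto simp: psd_mat_def)
    ultimately have "v \<bullet> (R1 *v v) = 0" "v \<bullet> (R2 *v v) = 0" by linarith+
    hence "R1 *v v = 0" "R2 *v v = 0" using psd_zero P1 P2 by blast+
    hence "D *v v = 0" unfolding D_def by (simp add: matrix_vector_mult_diff_rdistrib)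
    hence "mu *\<^sub>R v = 0" using Dv by simp
    moreover have "v \<noteq> 0" using E v by (auto simp: eigsys_def)
    ultimately show False using mu by simp
  qed
  have "D *v x = 0" for x
    using eig_apply[OF symD E X, of x] mu0 by simp
  hence "D = 0" by (simp add: matrix_eq)
  thus ?thesis unfolding D_def by simp
qed

lemma msqrt_props:
  assumes "psd_mat (M::real^'n^'n)"
  shows "psd_mat (msqrt M) \<and> msqrt M ** msqrt M = M"
proof -
  obtain R where R: "psd_mat R \<and> R ** R = M" using psd_sqrt_exists[OF assms] by blast
  have "\<exists>!R. psd_mat R \<and> R ** R = M"
    using R psd_sqrt_unique by (intro ex1I[of _ R]) auto
  thus ?thesis unfolding msqrt_def by (rule theI')
qed

lemma cont_mv[continuous_intros]: "continuous_on s f \<Longrightarrow> continuous_on s (\<lambda>x. (C::real^'n^'m) *v f x)"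
  by (rule bounded_linear.continuous_on[OF matrix_vector_mul_bounded_linear])

lemma pow_le4: "(t::real) \<ge> 0 \<Longrightarrow> k \<le> 4 \<Longrightarrow> t^k \<le> 1 + t^4"
proof -
  assume t: "t \<ge> 0" and k: "k \<le> 4"
  show ?thesis
  proof (cases "t \<le> 1")
    case True
    hence "t^k \<le> 1" using t by (simp add: power_le_one)
    thus ?thesis by (smt (verit) t zero_le_power)
  next
    case False
    hence "t^k \<le> t^4" using k by (intro power_increasing) auto
    thus ?thesis by simp
  qed
qed

lemma meas_P:
  assumes "sets P = sets borel" "continuous_on UNIV f"
  shows "f \<in> borel_measurable P"
proof -
  have "f \<in> borel_measurable borel" using assms(2) by (rule borel_measurable_continuous_onI)
  thus ?thesis by (simp add: measurable_cong_sets[OF assms(1) refl])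
qed

lemma meas_test:
  fixes C :: "real^'d^'d" and w :: "real^'d"
  assumes "sets P = sets (borel :: ((real^'d) \<times> real) measure)"
  shows "(\<lambda>z. ((snd z *\<^sub>R (C *v fst z)) - w) $ a * ((snd z *\<^sub>R (C *v fst z)) - w) $ b) \<in> borel_measurable P"
  by (intro meas_P[OF assms] continuous_intros)


definition Lb :: "((real^'d) \<times> real \<Rightarrow> real) \<Rightarrow> bool" where
  "Lb f \<longleftrightarrow> (\<exists>a. \<forall>z. \<bar>f z\<bar> \<le> a * (1 + norm z))"
definition Qb :: "((real^'d) \<times> real \<Rightarrow> real) \<Rightarrow> bool" where
  "Qb f \<longleftrightarrow> (\<exists>a. \<forall>z. \<bar>f z\<bar> \<le> a * (1 + (norm z)^2))"

lemma nfst: "norm (fst z) \<le> norm z"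
  by (cases z) (simp add: norm_fst_le)
lemma nsnd: "\<bar>snd z\<bar> \<le> norm (z::('a::real_normed_vector) \<times> real)"
  by (cases z) (metis norm_snd_le real_norm_def snd_conv)

lemma LbI: "(\<And>z. \<bar>f z\<bar> \<le> a * (1 + norm z)) \<Longrightarrow> Lb f"
  unfolding Lb_def by blast
lemma LbE: "Lb f \<Longrightarrow> (\<And>a. a \<ge> 0 \<Longrightarrow> (\<And>z. \<bar>f z\<bar> \<le> a * (1 + norm z)) \<Longrightarrow> thesis) \<Longrightarrow> thesis"
proof -
  assume "Lb f" and th: "\<And>a. a \<ge> 0 \<Longrightarrow> (\<And>z. \<bar>f z\<bar> \<le> a * (1 + norm z)) \<Longrightarrow> thesis"
  then obtain a where a: "\<And>z. \<bar>f z\<bar> \<le> a * (1 + norm z)" unfolding Lb_def by blast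
  have "\<bar>f z\<bar> \<le> \<bar>a\<bar> * (1 + norm z)" for z
  proof -
    have "a * (1 + norm z) \<le> \<bar>a\<bar> * (1 + norm z)" by (intro mult_right_mono) auto
    thus ?thesis using a[of z] by linarith
  qed
  thus thesis by (intro th[of "\<bar>a\<bar>"]) auto
qed
lemma QbI: "(\<And>z. \<bar>f z\<bar> \<le> a * (1 + (norm z)^2)) \<Longrightarrow> Qb f"
  unfolding Qb_def by blast
lemma QbE: "Qb f \<Longrightarrow> (\<And>a. a \<ge> 0 \<Longrightarrow> (\<And>z. \<bar>f z\<bar> \<le> a * (1 + (norm z)^2)) \<Longrightarrow> thesis) \<Longrightarrow> thesis"
proof -
  assume "Qb f" and th: "\<And>a. a \<ge> 0 \<Longrightarrow> (\<And>z. \<bar>f z\<bar> \<le> a * (1 + (norm z)^2)) \<Longrightarrow> thesis"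
  then obtain a where a: "\<And>z. \<bar>f z\<bar> \<le> a * (1 + (norm z)^2)" unfolding Qb_def by blast
  have "\<bar>f z\<bar> \<le> \<bar>a\<bar> * (1 + (norm z)^2)" for z
  proof -
    have "a * (1 + (norm z)^2) \<le> \<bar>a\<bar> * (1 + (norm z)^2)" by (intro mult_right_mono) auto
    thus ?thesis using a[of z] by linarith
  qed
  thus thesis by (intro th[of "\<bar>a\<bar>"]) auto
qed

lemma Lb_fst: fixes i :: "'d::finite" shows "Lb (\<lambda>z::(real^'d)\<times>real. fst z $ i)"
proof (rule LbI[where a=1])
  fix z :: "(real^'d) \<times> real"
  have "\<bar>fst z $ i\<bar> \<le> norm (fst z)" by (rule component_le_norm_cart)
  thus "\<bar>fst z $ i\<bar> \<le> 1 * (1 + norm z)" using nfst[of z] by simp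
qed
lemma Lb_snd: "Lb (\<lambda>z::(real^('d::finite))\<times>real. snd z)"
proof (rule LbI[where a=1])
  fix z :: "(real^'d) \<times> real"
  show "\<bar>snd z\<bar> \<le> 1 * (1 + norm z)" using nsnd[of z] by simp
qed
lemma Lb_const: "Lb (\<lambda>z::(real^('d::finite))\<times>real. c)"
proof (rule LbI[where a="\<bar>c\<bar>"])
  fix z :: "(real^'d) \<times> real"
  have "\<bar>c\<bar> * 1 \<le> \<bar>c\<bar> * (1 + norm z)" by (intro mult_left_mono) auto
  thus "\<bar>c\<bar> \<le> \<bar>c\<bar> * (1 + norm z)" by simp
qed
lemma Lb_add: fixes f g :: "(real^('d::finite)) \<times> real \<Rightarrow> real" assumes "Lb f" "Lb g" shows "Lb (\<lambda>z. f z + g z)"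
proof -
  obtain a where a0: "a \<ge> 0" and a: "\<And>z. \<bar>f z\<bar> \<le> a * (1 + norm z)" using assms(1) by (elim LbE) blast
  obtain b where b0: "b \<ge> 0" and b: "\<And>z. \<bar>g z\<bar> \<le> b * (1 + norm z)" using assms(2) by (elim LbE) blast
  show ?thesis
  proof (rule LbI[where a="a+b"])
    fix z show "\<bar>f z + g z\<bar> \<le> (a + b) * (1 + norm z)" using a[of z] b[of z] by (simp add: distrib_right)
  qed
qed
lemma Lb_cmult: fixes f g :: "(real^('d::finite)) \<times> real \<Rightarrow> real" assumes "Lb f" shows "Lb (\<lambda>z. c * f z)"
proof -
  obtain a where a0: "a \<ge> 0" and a: "\<And>z. \<bar>f z\<bar> \<le> a * (1 + norm z)" using assms by (elim LbE) blast
  show ?thesis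
  proof (rule LbI[where a="\<bar>c\<bar> * a"])
    fix z have "\<bar>c * f z\<bar> = \<bar>c\<bar> * \<bar>f z\<bar>" by (simp add: abs_mult)
    also have "\<dots> \<le> \<bar>c\<bar> * (a * (1 + norm z))" using a[of z] by (intro mult_left_mono) auto
    finally show "\<bar>c * f z\<bar> \<le> \<bar>c\<bar> * a * (1 + norm z)" by (simp add: mult.assoc)
  qed
qed
lemma Lb_cmult': "Lb f \<Longrightarrow> Lb (\<lambda>z. f z * c)"
  using Lb_cmult[of f c] by (simp add: mult.commute)
lemma Lb_diff: "Lb f \<Longrightarrow> Lb g \<Longrightarrow> Lb (\<lambda>z. f z - g z)"
  using Lb_add[of f "\<lambda>z. (-1) * g z"] Lb_cmult[of g "-1"] by simp
lemma Lb_sum: "finite I \<Longrightarrow> (\<And>i. i \<in> I \<Longrightarrow> Lb (f i)) \<Longrightarrow> Lb (\<lambda>z. \<Sum>i\<in>I. f i z)"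
proof (induction I rule: finite_induct)
  case empty thus ?case using Lb_const[of 0] by simp
next
  case (insert x F) thus ?case using Lb_add[of "f x" "\<lambda>z. \<Sum>i\<in>F. f i z"] by simp
qed

lemma Lb_inner: "Lb (\<lambda>z. fst z \<bullet> u)"
  unfolding inner_vec_def
  by (intro Lb_sum) (auto intro: Lb_cmult' Lb_fst)
lemma Lb_mv: "Lb (\<lambda>z. (C *v fst z) $ a)"
  unfolding matrix_vector_mult_def
  by (simp, intro Lb_sum) (auto intro: Lb_cmult[OF Lb_fst])

lemma Qb_mult: fixes f g :: "(real^('d::finite)) \<times> real \<Rightarrow> real" assumes "Lb f" "Lb g" shows "Qb (\<lambda>z. f z * g z)"
proof -
  obtain a where a0: "a \<ge> 0" and a: "\<And>z. \<bar>f z\<bar> \<le> a * (1 + norm z)" using assms(1) by (elim LbE) blast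
  obtain b where b0: "b \<ge> 0" and b: "\<And>z. \<bar>g z\<bar> \<le> b * (1 + norm z)" using assms(2) by (elim LbE) blast
  show ?thesis
  proof (rule QbI[where a="2 * a * b"])
    fix z :: "(real^'d) \<times> real"
    have "\<bar>f z * g z\<bar> = \<bar>f z\<bar> * \<bar>g z\<bar>" by (simp add: abs_mult)
    also have "\<dots> \<le> (a * (1 + norm z)) * (b * (1 + norm z))"
      using a[of z] b[of z] by (intro mult_mono) auto
    also have "\<dots> = a * b * (1 + norm z)^2" by (simp add: power2_eq_square algebra_simps)
    also have "\<dots> \<le> a * b * (2 * (1 + (norm z)^2))"
    proof (intro mult_left_mono)
      have "0 \<le> (1 - norm z)^2" by simp
      thus "(1 + norm z)^2 \<le> 2 * (1 + (norm z)^2)" by (simp add: power2_eq_square algebra_simps)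
    qed (use a0 b0 in auto)
    finally show "\<bar>f z * g z\<bar> \<le> 2 * a * b * (1 + (norm z)^2)" by (simp add: algebra_simps)
  qed
qed

lemma Qb_const: "Qb (\<lambda>z::(real^('d::finite))\<times>real. c)"
proof (rule QbI[where a="\<bar>c\<bar>"])
  fix z :: "(real^'d) \<times> real"
  have "\<bar>c\<bar> * 1 \<le> \<bar>c\<bar> * (1 + (norm z)^2)" by (intro mult_left_mono) auto
  thus "\<bar>c\<bar> \<le> \<bar>c\<bar> * (1 + (norm z)^2)" by simp
qed
lemma Qb_add: fixes f g :: "(real^('d::finite)) \<times> real \<Rightarrow> real" assumes "Qb f" "Qb g" shows "Qb (\<lambda>z. f z + g z)"
proof -
  obtain a where a0: "a \<ge> 0" and a: "\<And>z. \<bar>f z\<bar> \<le> a * (1 + (norm z)^2)" using assms(1) by (elim QbE) blast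
  obtain b where b0: "b \<ge> 0" and b: "\<And>z. \<bar>g z\<bar> \<le> b * (1 + (norm z)^2)" using assms(2) by (elim QbE) blast
  show ?thesis
  proof (rule QbI[where a="a+b"])
    fix z show "\<bar>f z + g z\<bar> \<le> (a + b) * (1 + (norm z)^2)" using a[of z] b[of z] by (simp add: distrib_right)
  qed
qed
lemma Qb_cmult: fixes f g :: "(real^('d::finite)) \<times> real \<Rightarrow> real" assumes "Qb f" shows "Qb (\<lambda>z. c * f z)"
proof -
  obtain a where a0: "a \<ge> 0" and a: "\<And>z. \<bar>f z\<bar> \<le> a * (1 + (norm z)^2)" using assms by (elim QbE) blast
  show ?thesis
  proof (rule QbI[where a="\<bar>c\<bar> * a"])
    fix z have "\<bar>c * f z\<bar> = \<bar>c\<bar> * \<bar>f z\<bar>" by (simp add: abs_mult)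
    also have "\<dots> \<le> \<bar>c\<bar> * (a * (1 + (norm z)^2))" using a[of z] by (intro mult_left_mono) auto
    finally show "\<bar>c * f z\<bar> \<le> \<bar>c\<bar> * a * (1 + (norm z)^2)" by (simp add: mult.assoc)
  qed
qed
lemma Qb_diff: "Qb f \<Longrightarrow> Qb g \<Longrightarrow> Qb (\<lambda>z. f z - g z)"
  using Qb_add[of f "\<lambda>z. (-1) * g z"] Qb_cmult[of g "-1"] by simp
lemma Qb_sum: "finite I \<Longrightarrow> (\<And>i. i \<in> I \<Longrightarrow> Qb (f i)) \<Longrightarrow> Qb (\<lambda>z. \<Sum>i\<in>I. f i z)"
proof (induction I rule: finite_induct)
  case empty thus ?case using Qb_const[of 0] by simp
next
  case (insert x F) thus ?case using Qb_add[of "f x" "\<lambda>z. \<Sum>i\<in>F. f i z"] by simp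
qed

lemma int_QQ:
  fixes f g :: "(real^('d::finite)) \<times> real \<Rightarrow> real" 
  assumes D: "is_distr P" and f: "Qb f" and g: "Qb g" and m: "(\<lambda>z. f z * g z) \<in> borel_measurable P"
  shows "integrable P (\<lambda>z. f z * g z)"
proof -
  interpret prob_space P using D by (simp add: is_distr_def)
  obtain a where a0: "a \<ge> 0" and a: "\<And>z. \<bar>f z\<bar> \<le> a * (1 + (norm z)^2)" using f by (elim QbE) blast
  obtain b where b0: "b \<ge> 0" and b: "\<And>z. \<bar>g z\<bar> \<le> b * (1 + (norm z)^2)" using g by (elim QbE) blast
  have i4: "integrable P (\<lambda>z. (norm z)^4)" using D by (simp add: is_distr_def)
  have int: "integrable P (\<lambda>z. 2 * a * b * (1 + (norm z)^4))"
    using i4 by (intro integrable_mult_right integrable_add) auto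
  have bnd: "norm (f z * g z) \<le> norm (2 * a * b * (1 + (norm z)^4))" for z
  proof -
    have "norm (f z * g z) = \<bar>f z\<bar> * \<bar>g z\<bar>" by (simp add: abs_mult)
    also have "\<dots> \<le> (a * (1 + (norm z)^2)) * (b * (1 + (norm z)^2))"
      using a[of z] b[of z] by (intro mult_mono) auto
    also have "\<dots> = a * b * (1 + (norm z)^2)^2" by (simp add: power2_eq_square algebra_simps)
    also have "\<dots> \<le> a * b * (2 * (1 + (norm z)^4))"
    proof (intro mult_left_mono)
      have "0 \<le> (1 - (norm z)^2)^2" by simp
      hence "(1 + (norm z)^2)^2 \<le> 2 * (1 + ((norm z)^2)^2)" by (simp add: power2_eq_square algebra_simps)
      thus "(1 + (norm z)^2)^2 \<le> 2 * (1 + (norm z)^4)" by (simp add: power_mult[symmetric])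
    qed (use a0 b0 in auto)
    also have "\<dots> = norm (2 * a * b * (1 + (norm z)^4))" using a0 b0 by (simp add: algebra_simps)
    finally show ?thesis .
  qed
  show ?thesis by (rule Bochner_Integration.integrable_bound[OF int m]) (use bnd in auto)
qed

lemma int_Q:
  fixes f g :: "(real^('d::finite)) \<times> real \<Rightarrow> real" 
  assumes D: "is_distr P" and f: "Qb f" and m: "f \<in> borel_measurable P"
  shows "integrable P f"
  using int_QQ[OF D f Qb_const[of 1]] m by simp


lemma Pi_prod:
  assumes P: "prob_space P" and fin: "finite I" and F: "\<And>i. i \<in> I \<Longrightarrow> integrable P (F i :: _ \<Rightarrow> real)"
  shows "integrable (PiM I (\<lambda>_. P)) (\<lambda>\<omega>. \<Prod>i\<in>I. F i (\<omega> i))"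
    and "(\<integral>\<omega>. (\<Prod>i\<in>I. F i (\<omega> i)) \<partial>PiM I (\<lambda>_. P)) = (\<Prod>i\<in>I. integral\<^sup>L P (F i))"
proof -
  interpret prob_space P by fact
  interpret product_sigma_finite "\<lambda>_. P"
    by (simp add: product_sigma_finite_def sigma_finite_measure_axioms)
  show "integrable (PiM I (\<lambda>_. P)) (\<lambda>\<omega>. \<Prod>i\<in>I. F i (\<omega> i))"
    using product_integrable_prod[OF fin F] by simp
  show "(\<integral>\<omega>. (\<Prod>i\<in>I. F i (\<omega> i)) \<partial>PiM I (\<lambda>_. P)) = (\<Prod>i\<in>I. integral\<^sup>L P (F i))"
    using product_integral_prod[OF fin F] by simp
qed

lemma Pi_single:
  assumes P: "prob_space P" and fin: "finite I" and i: "i \<in> I" and f: "integrable P (f :: _ \<Rightarrow> real)"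
  shows "integrable (PiM I (\<lambda>_. P)) (\<lambda>\<omega>. f (\<omega> i))"
    and "(\<integral>\<omega>. f (\<omega> i) \<partial>PiM I (\<lambda>_. P)) = integral\<^sup>L P f"
proof -
  interpret prob_space P by fact
  define F where "F k z = (if k = i then f z else 1)" for k z
  have Fk: "F k = (if k = i then f else (\<lambda>_. 1))" for k by (simp add: F_def fun_eq_iff)
  have F: "k \<in> I \<Longrightarrow> integrable P (F k)" for k using f by (simp add: Fk)
  have eq: "(\<Prod>k\<in>I. F k (\<omega> k)) = f (\<omega> i)" for \<omega>
    unfolding F_def using fin i by (simp add: prod.delta)
  have eq2: "(\<Prod>k\<in>I. integral\<^sup>L P (F k)) = integral\<^sup>L P f"
  proof -
    have "(\<Prod>k\<in>I. integral\<^sup>L P (F k)) = (\<Prod>k\<in>I. if k = i then integral\<^sup>L P f else 1)"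
      by (intro prod.cong) (auto simp: Fk prob_space)
    thus ?thesis using fin i by (simp add: prod.delta)
  qed
  have A: "integrable (PiM I (\<lambda>_. P)) (\<lambda>\<omega>. \<Prod>k\<in>I. F k (\<omega> k))" by (rule Pi_prod(1)[OF P fin]) (rule F)
  have B: "(\<integral>\<omega>. (\<Prod>k\<in>I. F k (\<omega> k)) \<partial>PiM I (\<lambda>_. P)) = (\<Prod>k\<in>I. integral\<^sup>L P (F k))"
    by (rule Pi_prod(2)[OF P fin]) (rule F)
  show "integrable (PiM I (\<lambda>_. P)) (\<lambda>\<omega>. f (\<omega> i))" using A eq by simp
  show "(\<integral>\<omega>. f (\<omega> i) \<partial>PiM I (\<lambda>_. P)) = integral\<^sup>L P f" using B eq eq2 by simp
qed

lemma Pi_pair: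
  assumes P: "prob_space P" and fin: "finite I" and i: "i \<in> I" and j: "j \<in> I" and ij: "i \<noteq> j"
    and f: "integrable P (f :: _ \<Rightarrow> real)" and g: "integrable P (g :: _ \<Rightarrow> real)"
  shows "integrable (PiM I (\<lambda>_. P)) (\<lambda>\<omega>. f (\<omega> i) * g (\<omega> j))"
    and "(\<integral>\<omega>. f (\<omega> i) * g (\<omega> j) \<partial>PiM I (\<lambda>_. P)) = integral\<^sup>L P f * integral\<^sup>L P g"
proof -
  interpret prob_space P by fact
  define F where "F k z = (if k = i then f z else if k = j then g z else 1)" for k z
  have Fk: "F k = (if k = i then f else if k = j then g else (\<lambda>_. 1))" for k by (simp add: F_def fun_eq_iff)
  have F: "k \<in> I \<Longrightarrow> integrable P (F k)" for k using f g by (simp add: Fk)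
  have gen: "(\<Prod>k\<in>I. h k) = h i * h j" if "\<And>k. k \<in> I \<Longrightarrow> k \<noteq> i \<Longrightarrow> k \<noteq> j \<Longrightarrow> h k = 1" for h :: "_ \<Rightarrow> real"
  proof -
    have "(\<Prod>k\<in>I. h k) = h i * (\<Prod>k\<in>I - {i}. h k)" using fin i by (rule prod.remove)
    also have "(\<Prod>k\<in>I - {i}. h k) = h j * (\<Prod>k\<in>I - {i} - {j}. h k)" using fin j ij by (intro prod.remove) auto
    also have "(\<Prod>k\<in>I - {i} - {j}. h k) = 1" using that by (intro prod.neutral) auto
    finally show ?thesis by simp
  qed
  have eq: "(\<Prod>k\<in>I. F k (\<omega> k)) = f (\<omega> i) * g (\<omega> j)" for \<omega>
    using gen[of "\<lambda>k. F k (\<omega> k)"] ij by (simp add: F_def)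
  have eq2: "(\<Prod>k\<in>I. integral\<^sup>L P (F k)) = integral\<^sup>L P f * integral\<^sup>L P g"
    using gen[of "\<lambda>k. integral\<^sup>L P (F k)"] ij by (simp add: Fk prob_space)
  have A: "integrable (PiM I (\<lambda>_. P)) (\<lambda>\<omega>. \<Prod>k\<in>I. F k (\<omega> k))" by (rule Pi_prod(1)[OF P fin]) (rule F)
  have B: "(\<integral>\<omega>. (\<Prod>k\<in>I. F k (\<omega> k)) \<partial>PiM I (\<lambda>_. P)) = (\<Prod>k\<in>I. integral\<^sup>L P (F k))"
    by (rule Pi_prod(2)[OF P fin]) (rule F)
  show "integrable (PiM I (\<lambda>_. P)) (\<lambda>\<omega>. f (\<omega> i) * g (\<omega> j))" using A eq by simp
  show "(\<integral>\<omega>. f (\<omega> i) * g (\<omega> j) \<partial>PiM I (\<lambda>_. P)) = integral\<^sup>L P f * integral\<^sup>L P g"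
    using B eq eq2 by simp
qed


lemma qform_expand: "qform T v = (\<Sum>a\<in>UNIV. \<Sum>b\<in>UNIV. T $ a $ b * (v $ a * v $ b))"
  by (simp add: qform_def inner_vec_def matrix_vector_mult_def sum_distrib_left mult_ac)

lemma sum_ifeq: "(\<Sum>i<n. \<Sum>j<n. if i = j then (x::real) else y) = real n * x + (real n * real n - real n) * y"
proof -
  have "(\<Sum>j<n. if i = j then x else y) = real n * y + (x - y)" if "i < n" for i
  proof -
    have "(\<Sum>j<n. if i = j then x else y) = (\<Sum>j<n. y + (if i = j then x - y else 0))"
      by (intro sum.cong) auto
    also have "\<dots> = real n * y + (x - y)" using that by (simp add: sum.distrib)
    finally show ?thesis .
  qed
  hence "(\<Sum>i<n. \<Sum>j<n. if i = j then x else y) = (\<Sum>i<n. real n * y + (x - y))" by simp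
  also have "\<dots> = real n * x + (real n * real n - real n) * y" by (simp add: algebra_simps)
  finally show ?thesis .
qed

lemma integral_sum4:
  fixes f :: "_ \<Rightarrow> _ \<Rightarrow> _ \<Rightarrow> _ \<Rightarrow> _ \<Rightarrow> real"
  assumes f: "\<And>a b i j. a \<in> A \<Longrightarrow> b \<in> B \<Longrightarrow> i \<in> I \<Longrightarrow> j \<in> J \<Longrightarrow> integrable M (f a b i j)"
  shows "integral\<^sup>L M (\<lambda>\<omega>. \<Sum>a\<in>A. \<Sum>b\<in>B. \<Sum>i\<in>I. \<Sum>j\<in>J. f a b i j \<omega>)
       = (\<Sum>a\<in>A. \<Sum>b\<in>B. \<Sum>i\<in>I. \<Sum>j\<in>J. integral\<^sup>L M (f a b i j))"
proof -
  have 1: "integrable M (\<lambda>\<omega>. \<Sum>j\<in>J. f a b i j \<omega>)" if "a \<in> A" "b \<in> B" "i \<in> I" for a b i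
    using that by (auto intro!: Bochner_Integration.integrable_sum f)
  have 2: "integrable M (\<lambda>\<omega>. \<Sum>i\<in>I. \<Sum>j\<in>J. f a b i j \<omega>)" if "a \<in> A" "b \<in> B" for a b
    by (rule Bochner_Integration.integrable_sum, rule 1) (use that in auto)
  have 3: "integrable M (\<lambda>\<omega>. \<Sum>b\<in>B. \<Sum>i\<in>I. \<Sum>j\<in>J. f a b i j \<omega>)" if "a \<in> A" for a
    by (rule Bochner_Integration.integrable_sum, rule 2) (use that in auto)
  have "integral\<^sup>L M (\<lambda>\<omega>. \<Sum>a\<in>A. \<Sum>b\<in>B. \<Sum>i\<in>I. \<Sum>j\<in>J. f a b i j \<omega>)
      = (\<Sum>a\<in>A. integral\<^sup>L M (\<lambda>\<omega>. \<Sum>b\<in>B. \<Sum>i\<in>I. \<Sum>j\<in>J. f a b i j \<omega>))"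
    by (rule Bochner_Integration.integral_sum) (rule 3)
  also have "\<dots> = (\<Sum>a\<in>A. \<Sum>b\<in>B. integral\<^sup>L M (\<lambda>\<omega>. \<Sum>i\<in>I. \<Sum>j\<in>J. f a b i j \<omega>))"
    by (intro sum.cong refl Bochner_Integration.integral_sum 2)
  also have "\<dots> = (\<Sum>a\<in>A. \<Sum>b\<in>B. \<Sum>i\<in>I. integral\<^sup>L M (\<lambda>\<omega>. \<Sum>j\<in>J. f a b i j \<omega>))"
    by (intro sum.cong refl Bochner_Integration.integral_sum 1)
  also have "\<dots> = (\<Sum>a\<in>A. \<Sum>b\<in>B. \<Sum>i\<in>I. \<Sum>j\<in>J. integral\<^sup>L M (f a b i j))"
    by (intro sum.cong refl Bochner_Integration.integral_sum) (auto intro: f)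
  finally show ?thesis .
qed

lemma Pi_quad:
  fixes T :: "real^'d^'d" and G :: "'a \<Rightarrow> real^'d"
  assumes P: "prob_space P" and n: "n \<ge> 1"
    and int1: "\<And>a. integrable P (\<lambda>z. G z $ a)"
    and int2: "\<And>a b. integrable P (\<lambda>z. G z $ a * G z $ b)"
  defines "m a \<equiv> integral\<^sup>L P (\<lambda>z. G z $ a)"
  shows "integrable (PiM {..<n} (\<lambda>_. P)) (\<lambda>\<omega>. qform T ((1 / real n) *\<^sub>R (\<Sum>i<n. G (\<omega> i))))"
    and "(\<integral>\<omega>. qform T ((1 / real n) *\<^sub>R (\<Sum>i<n. G (\<omega> i))) \<partial>PiM {..<n} (\<lambda>_. P)) =
         (\<Sum>a\<in>UNIV. \<Sum>b\<in>UNIV. T $ a $ b * (m a * m b))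
         + (1 / real n) * (\<Sum>a\<in>UNIV. \<Sum>b\<in>UNIV. T $ a $ b * (integral\<^sup>L P (\<lambda>z. G z $ a * G z $ b) - m a * m b))"
proof -
  define Pi where "Pi = PiM {..<n} (\<lambda>_. P)"
  define X where "X a b (i::nat) (j::nat) (\<omega>::nat \<Rightarrow> 'a) = G (\<omega> i) $ a * G (\<omega> j) $ b" for a b i j \<omega>
  have Xeq: "X a b i j = (\<lambda>\<omega>. G (\<omega> i) $ a * G (\<omega> j) $ b)" for a b i j
    by (simp add: X_def fun_eq_iff)
  have intX: "integrable Pi (X a b i j)" if "i < n" "j < n" for a b i j
  proof (cases "i = j")
    case True
    thus ?thesis using Pi_single(1)[OF P _ _ int2[of a b], of "{..<n}" i] that
      by (simp add: Xeq Pi_def)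
  next
    case False
    thus ?thesis using Pi_pair(1)[OF P _ _ _ False int1[of a] int1[of b], of "{..<n}"] that
      by (simp add: Xeq Pi_def)
  qed
  have EX: "integral\<^sup>L Pi (X a b i j) = (if i = j then integral\<^sup>L P (\<lambda>z. G z $ a * G z $ b) else m a * m b)"
    if "i < n" "j < n" for a b i j
  proof (cases "i = j")
    case True
    thus ?thesis using Pi_single(2)[OF P _ _ int2[of a b], of "{..<n}" i] that
      by (simp add: Xeq Pi_def)
  next
    case False
    thus ?thesis using Pi_pair(2)[OF P _ _ _ False int1[of a] int1[of b], of "{..<n}"] that
      by (simp add: Xeq Pi_def m_def)
  qed
  have feq: "qform T ((1 / real n) *\<^sub>R (\<Sum>i<n. G (\<omega> i))) =
      (\<Sum>a\<in>UNIV. \<Sum>b\<in>UNIV. \<Sum>i<n. \<Sum>j<n. (T $ a $ b / (real n * real n)) * X a b i j \<omega>)" for \<omega>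
  proof -
    have "qform T ((1 / real n) *\<^sub>R (\<Sum>i<n. G (\<omega> i))) =
      (\<Sum>a\<in>UNIV. \<Sum>b\<in>UNIV. \<Sum>i<n. \<Sum>j<n. (T $ a $ b / (real n * real n)) * X a b j i \<omega>)"
      unfolding qform_expand X_def
      by (simp add: sum_component sum_distrib_left sum_distrib_right mult_ac)
    also have "\<dots> = (\<Sum>a\<in>UNIV. \<Sum>b\<in>UNIV. \<Sum>i<n. \<Sum>j<n. (T $ a $ b / (real n * real n)) * X a b i j \<omega>)"
      by (rule sum.cong[OF refl], rule sum.cong[OF refl], rule sum.swap)
    finally show ?thesis .
  qed
  have intF: "integrable Pi (\<lambda>\<omega>. \<Sum>a\<in>UNIV. \<Sum>b\<in>UNIV. \<Sum>i<n. \<Sum>j<n. (T $ a $ b / (real n * real n)) * X a b i j \<omega>)"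
    by (intro Bochner_Integration.integrable_sum Bochner_Integration.integrable_mult_right intX) auto
  show "integrable (PiM {..<n} (\<lambda>_. P)) (\<lambda>\<omega>. qform T ((1 / real n) *\<^sub>R (\<Sum>i<n. G (\<omega> i))))"
    using intF by (simp add: feq Pi_def)
  have "(\<integral>\<omega>. qform T ((1 / real n) *\<^sub>R (\<Sum>i<n. G (\<omega> i))) \<partial>Pi) =
     (\<Sum>a\<in>UNIV. \<Sum>b\<in>UNIV. \<Sum>i<n. \<Sum>j<n. (T $ a $ b / (real n * real n)) * integral\<^sup>L Pi (X a b i j))"
  proof -
    have ii: "integrable Pi (\<lambda>\<omega>. (T $ a $ b / (real n * real n)) * X a b i j \<omega>)"
      if "a \<in> UNIV" "b \<in> UNIV" "i \<in> {..<n}" "j \<in> {..<n}" for a b i j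
      by (rule Bochner_Integration.integrable_mult_right, rule intX) (use that in auto)
    have "integral\<^sup>L Pi (\<lambda>\<omega>. \<Sum>a\<in>UNIV. \<Sum>b\<in>UNIV. \<Sum>i<n. \<Sum>j<n. (T $ a $ b / (real n * real n)) * X a b i j \<omega>)
      = (\<Sum>a\<in>UNIV. \<Sum>b\<in>UNIV. \<Sum>i<n. \<Sum>j<n. integral\<^sup>L Pi (\<lambda>\<omega>. (T $ a $ b / (real n * real n)) * X a b i j \<omega>))"
      by (rule integral_sum4) (rule ii)
    thus ?thesis by (simp only: feq Bochner_Integration.integral_mult_right_zero)
  qed
  also have "\<dots> = (\<Sum>a\<in>UNIV. \<Sum>b\<in>UNIV. (T $ a $ b / (real n * real n)) *
        (\<Sum>i<n. \<Sum>j<n. if i = j then integral\<^sup>L P (\<lambda>z. G z $ a * G z $ b) else m a * m b))"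
    by (simp add: EX sum_distrib_left)
  also have "\<dots> = (\<Sum>a\<in>UNIV. \<Sum>b\<in>UNIV. T $ a $ b * (m a * m b)
        + (1 / real n) * (T $ a $ b * (integral\<^sup>L P (\<lambda>z. G z $ a * G z $ b) - m a * m b)))"
  proof (intro sum.cong refl)
    fix a b
    have nn: "real n > 0" using n by simp
    show "(T $ a $ b / (real n * real n)) *
        (\<Sum>i<n. \<Sum>j<n. if i = j then integral\<^sup>L P (\<lambda>z. G z $ a * G z $ b) else m a * m b) =
        T $ a $ b * (m a * m b) + (1 / real n) * (T $ a $ b * (integral\<^sup>L P (\<lambda>z. G z $ a * G z $ b) - m a * m b))"
      unfolding sum_ifeq using nn by (simp add: field_simps)
  qed
  also have "\<dots> = (\<Sum>a\<in>UNIV. \<Sum>b\<in>UNIV. T $ a $ b * (m a * m b))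
         + (1 / real n) * (\<Sum>a\<in>UNIV. \<Sum>b\<in>UNIV. T $ a $ b * (integral\<^sup>L P (\<lambda>z. G z $ a * G z $ b) - m a * m b))"
    by (simp add: sum.distrib sum_distrib_left)
  finally show "(\<integral>\<omega>. qform T ((1 / real n) *\<^sub>R (\<Sum>i<n. G (\<omega> i))) \<partial>PiM {..<n} (\<lambda>_. P)) =
         (\<Sum>a\<in>UNIV. \<Sum>b\<in>UNIV. T $ a $ b * (m a * m b))
         + (1 / real n) * (\<Sum>a\<in>UNIV. \<Sum>b\<in>UNIV. T $ a $ b * (integral\<^sup>L P (\<lambda>z. G z $ a * G z $ b) - m a * m b))"
    unfolding Pi_def .
qed

lemma inv_props: "invertible (A::real^'n^'n) \<Longrightarrow> A ** matrix_inv A = mat 1 \<and> matrix_inv A ** A = mat 1"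
  unfolding matrix_inv_def invertible_def by (rule someI_ex)

lemma inv_unique:
  assumes "invertible (A::real^'n^'n)" "A ** B = mat 1"
  shows "matrix_inv A = B"
proof -
  have "matrix_inv A = matrix_inv A ** (A ** B)" using assms(2) by simp
  also have "\<dots> = (matrix_inv A ** A) ** B" by (simp add: matrix_mul_assoc)
  also have "\<dots> = B" using inv_props[OF assms(1)] by simp
  finally show ?thesis .
qed

lemma ker_invertible: "(\<And>x. (A::real^'n^'n) *v x = 0 \<Longrightarrow> x = 0) \<Longrightarrow> invertible A"
  using invertible_left_inverse matrix_left_invertible_ker by blast

lemma pd_invertible: "pd_mat (A::real^'n^'n) \<Longrightarrow> invertible A"
  by (rule ker_invertible) (metis pd_mat_def inner_zero_right less_irrefl)

lemma sym_inv:
  assumes "invertible (A::real^'n^'n)" "transpose A = A"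
  shows "transpose (matrix_inv A) = matrix_inv A"
proof -
  have "A ** transpose (matrix_inv A) = transpose (matrix_inv A ** A)"
    using assms(2) by (simp add: matrix_transpose_mul)
  also have "\<dots> = mat 1" using inv_props[OF assms(1)] by simp
  finally show ?thesis using inv_unique[OF assms(1)] by metis
qed

lemma qform_mult:
  assumes "transpose T = T"
  shows "qform T (B *v u) = qform (transpose B ** T ** B) u"
proof -
  have "qform T (B *v u) = (B *v u) \<bullet> ((T ** B) *v u)" by (simp add: qform_def matrix_vector_mul_assoc)
  also have "\<dots> = (transpose (T ** B) *v (B *v u)) \<bullet> u" by (rule dot_transpose)
  also have "\<dots> = ((transpose B ** T ** B) *v u) \<bullet> u"
    using assms by (simp only: matrix_transpose_mul matrix_vector_mul_assoc matrix_mul_assoc)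
  finally show ?thesis by (simp add: qform_def inner_commute)
qed

lemma quad_le_spec:
  assumes "norm u \<le> 1"
  shows "u \<bullet> (Q *v u) \<le> spec_norm Q"
proof -
  have bl: "bounded_linear ((*v) Q)" by (rule matrix_vector_mul_bounded_linear)
  have on: "onorm ((*v) Q) \<ge> 0" by (rule onorm_pos_le[OF bl])
  have "u \<bullet> (Q *v u) \<le> norm u * norm (Q *v u)" by (rule norm_cauchy_schwarz)
  also have "\<dots> \<le> norm u * (onorm ((*v) Q) * norm u)" by (intro mult_left_mono onorm[OF bl]) auto
  also have "\<dots> \<le> 1 * (onorm ((*v) Q) * 1)"
    using assms on by (intro mult_mono) auto
  finally show ?thesis by (simp add: spec_norm_def)
qed


locale algctx =
  fixes R Mi S Si T :: "real^'n^'n"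
  assumes RMi: "R ** Mi = mat 1" and MiR: "Mi ** R = mat 1"
    and SSi: "S ** Si = mat 1" and SiS: "Si ** S = mat 1"
    and sR: "transpose R = R" and sMi: "transpose Mi = Mi" and sS: "transpose S = S"
    and sSi: "transpose Si = Si" and sT: "transpose T = T"
begin

lemma RMi': "X ** R ** Mi = X"
  by (metis RMi matrix_mul_assoc matrix_mul_rid)
lemma MiR': "X ** Mi ** R = X"
  by (metis MiR matrix_mul_assoc matrix_mul_rid)
lemma SSi': "X ** S ** Si = X"
  by (metis SSi matrix_mul_assoc matrix_mul_rid)
lemma SiS': "X ** Si ** S = X"
  by (metis SiS matrix_mul_assoc matrix_mul_rid)

lemma f1: "(Mi ** A ** R ** Si) *v (S *v w) - w = - ((Mi ** (mat 1 - A)) *v (R *v w))"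
proof -
  have "(Mi ** A ** R ** Si) *v (S *v w) = (Mi ** A ** R) *v w"
    by (simp only: matrix_vector_mul_assoc SiS')
  moreover have "(Mi ** (mat 1 - A)) *v (R *v w) = Mi *v (R *v w) - Mi *v (A *v (R *v w))"
    by (simp only: matrix_vector_mul_assoc[symmetric] matrix_vector_mult_diff_rdistrib
          matrix_vector_mult_diff_distrib matrix_vector_mul_lid)
  moreover have "Mi *v (R *v w) = w" by (simp only: matrix_vector_mul_assoc MiR matrix_vector_mul_lid)
  moreover have "Mi *v (A *v (R *v w)) = (Mi ** A ** R) *v w" by (simp only: matrix_vector_mul_assoc matrix_mul_assoc)
  ultimately show ?thesis by simp
qed

lemma f2: "qform T ((Mi ** (mat 1 - A)) *v u) = u \<bullet> ((transpose (mat 1 - A) ** (Mi ** T ** Mi) ** (mat 1 - A)) *v u)"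
  unfolding qform_mult[OF sT] by (simp only: qform_def matrix_transpose_mul sMi matrix_mul_assoc)

lemma f3: "trace (S ** (transpose (Mi ** A ** R ** Si) ** T ** (Mi ** A ** R ** Si))) = trace ((Mi ** T ** Mi) ** (A ** (R ** Si ** R) ** transpose A))"
proof -
  have tC: "transpose (Mi ** A ** R ** Si) = Si ** R ** transpose A ** Mi"
    by (simp only: matrix_transpose_mul sMi sR sSi matrix_mul_assoc)
  have "S ** (Si ** R ** transpose A ** Mi ** T ** (Mi ** A ** R ** Si)) = (S ** Si) ** (R ** transpose A) ** (Mi ** T ** Mi ** A ** R ** Si)"
    by (simp only: matrix_mul_assoc)
  also have "\<dots> = (R ** transpose A) ** (Mi ** T ** Mi ** A ** R ** Si)"
    by (simp only: SSi matrix_mul_lid)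
  finally have e1: "S ** (transpose (Mi ** A ** R ** Si) ** T ** (Mi ** A ** R ** Si)) = (R ** transpose A) ** (Mi ** T ** Mi ** A ** R ** Si)"
    unfolding tC .
  have "trace ((R ** transpose A) ** (Mi ** T ** Mi ** A ** R ** Si)) = trace ((Mi ** T ** Mi ** A ** R ** Si) ** (R ** transpose A))"
    by (rule trace_mul_sym)
  also have "(Mi ** T ** Mi ** A ** R ** Si) ** (R ** transpose A) = (Mi ** T ** Mi) ** (A ** (R ** Si ** R) ** transpose A)"
    by (simp only: matrix_mul_assoc)
  finally show ?thesis unfolding e1 .
qed

lemma f4: "w \<bullet> (S *v w) = (R *v w) \<bullet> ((Mi ** S ** Mi) *v (R *v w))"
proof -
  have "(Mi ** S ** Mi) *v (R *v w) = Mi *v (S *v w)" by (simp only: matrix_vector_mul_assoc MiR')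
  hence "(R *v w) \<bullet> ((Mi ** S ** Mi) *v (R *v w)) = (transpose Mi *v (R *v w)) \<bullet> (S *v w)"
    by (simp only: dot_transpose)
  also have "\<dots> = w \<bullet> (S *v w)" by (simp only: sMi matrix_vector_mul_assoc MiR matrix_vector_mul_lid)
  finally show ?thesis by simp
qed

lemma f5: "(R *v w) \<bullet> (R *v w) = w \<bullet> ((R ** R) *v w)"
proof -
  have "(R *v w) \<bullet> (R *v w) = (transpose R *v (R *v w)) \<bullet> w" by (rule dot_transpose)
  also have "\<dots> = ((R ** R) *v w) \<bullet> w" by (simp only: sR matrix_vector_mul_assoc)
  finally show ?thesis by (simp only: inner_commute)
qed

lemma f6: "(Mi ** S ** Mi) ** (R ** Si ** R) = mat 1"
  by (simp only: matrix_mul_assoc MiR' SSi' MiR)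
lemma f7: "(R ** Si ** R) ** (Mi ** S ** Mi) = mat 1"
  by (simp only: matrix_mul_assoc RMi' SiS' RMi)
lemma f8: "transpose (Mi ** T ** Mi) = Mi ** T ** Mi"
  by (simp only: matrix_transpose_mul sMi sT matrix_mul_assoc)

end

lemma sdelta: fixes c :: "'a::finite \<Rightarrow> real" shows "(\<Sum>j\<in>UNIV. c j * (if l = j then 1 else 0)) = c l"
proof -
  have "(\<Sum>j\<in>UNIV. c j * (if l = j then 1 else 0)) = (\<Sum>j\<in>UNIV. if j = l then c j else 0)"
    by (intro sum.cong) auto
  thus ?thesis by simp
qed

lemma mat_expand: "(F::real^'n^'m) = (\<Sum>i\<in>UNIV. \<Sum>j\<in>UNIV. (F $ i $ j) *\<^sub>R axis i (axis j 1))"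
proof -
  have "(\<Sum>i\<in>UNIV. \<Sum>j\<in>UNIV. (F $ i $ j) *\<^sub>R (axis i (axis j 1) :: real^'n^'m)) $ k $ l = F $ k $ l" for k l
  proof -
    have "(\<Sum>i\<in>UNIV. \<Sum>j\<in>UNIV. (F $ i $ j) *\<^sub>R (axis i (axis j 1) :: real^'n^'m)) $ k $ l
        = (\<Sum>i\<in>UNIV. \<Sum>j\<in>UNIV. F $ i $ j * ((axis i (axis j 1) :: real^'n^'m) $ k $ l))"
      by (simp add: sum_component)
    also have "\<dots> = (\<Sum>i\<in>UNIV. if i = k then (\<Sum>j\<in>UNIV. if j = l then F $ i $ j else 0) else 0)"
      by (intro sum.cong refl) (auto simp: axis_def sdelta)
    also have "\<dots> = F $ k $ l" by simp
    finally show ?thesis .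
  qed
  thus ?thesis by (simp add: vec_eq_iff)
qed

lemma int_mat:
  fixes F :: "_ \<Rightarrow> real^'n^'m"
  assumes "\<And>i j. integrable P (\<lambda>z. F z $ i $ j)"
  shows "integrable P F"
proof -
  have "integrable P (\<lambda>z. \<Sum>i\<in>UNIV. \<Sum>j\<in>UNIV. (F z $ i $ j) *\<^sub>R (axis i (axis j 1) :: real^'n^'m))"
    using assms by (intro Bochner_Integration.integrable_sum integrable_scaleR_left) auto
  moreover have "F = (\<lambda>z. \<Sum>i\<in>UNIV. \<Sum>j\<in>UNIV. (F z $ i $ j) *\<^sub>R (axis i (axis j 1) :: real^'n^'m))"
    by (rule ext, rule mat_expand)
  ultimately show ?thesis by simp
qed

lemma bl_entry: "bounded_linear (\<lambda>A::real^'n^'m. A $ i $ j)"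
  using bounded_linear_compose[OF bounded_linear_vec_nth[of j] bounded_linear_vec_nth[of i]] by simp

lemma mat_entry:
  fixes F :: "_ \<Rightarrow> real^'n^'m"
  assumes "integrable P F"
  shows "integral\<^sup>L P F $ i $ j = (\<integral>z. F z $ i $ j \<partial>P)"
  using integral_bounded_linear[OF bl_entry assms] by simp

lemma int_entry:
  fixes F :: "_ \<Rightarrow> real^'n^'m"
  assumes "integrable P F"
  shows "integrable P (\<lambda>z. F z $ i $ j)"
  using integrable_bounded_linear[OF bl_entry assms] by simp

lemma qform_int:
  fixes F :: "_ \<Rightarrow> real^'n^'n"
  assumes F: "integrable P F"
  shows "qform (integral\<^sup>L P F) u = (\<integral>z. qform (F z) u \<partial>P)"
proof -
  have "qform (integral\<^sup>L P F) u = (\<Sum>a\<in>UNIV. \<Sum>b\<in>UNIV. (\<integral>z. F z $ a $ b \<partial>P) * (u $ a * u $ b))"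
    by (simp add: qform_expand mat_entry[OF F])
  also have "\<dots> = (\<Sum>a\<in>UNIV. \<Sum>b\<in>UNIV. (\<integral>z. F z $ a $ b * (u $ a * u $ b) \<partial>P))"
    by simp
  also have "\<dots> = (\<Sum>a\<in>UNIV. (\<integral>z. (\<Sum>b\<in>UNIV. F z $ a $ b * (u $ a * u $ b)) \<partial>P))"
    by (intro sum.cong refl Bochner_Integration.integral_sum[symmetric] integrable_mult_left int_entry[OF F])
  also have "\<dots> = (\<integral>z. (\<Sum>a\<in>UNIV. \<Sum>b\<in>UNIV. F z $ a $ b * (u $ a * u $ b)) \<partial>P)"
    by (intro Bochner_Integration.integral_sum[symmetric] Bochner_Integration.integrable_sum
        integrable_mult_left int_entry[OF F])
  finally show ?thesis by (simp add: qform_expand)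
qed

lemma qform_outer: "qform (c *\<^sub>R outer x x) u = c * (u \<bullet> x)^2"
  by (simp add: qform_def scaleR_matrix_vector_assoc[symmetric] outer_mv power2_eq_square inner_commute)

lemma outer3: "outer x x ** outer w w ** outer x x = ((x \<bullet> w)^2) *\<^sub>R outer x x"
proof -
  have "(outer x x ** outer w w ** outer x x) *v u = (((x \<bullet> w)^2) *\<^sub>R outer x x) *v u" for u
    by (simp add: matrix_vector_mul_assoc[symmetric] outer_mv scaleR_matrix_vector_assoc[symmetric]
        matrix_vector_mult_scaleR power2_eq_square inner_commute)
  thus ?thesis by (simp add: matrix_eq)
qed

lemma psd_outer: "psd_mat (outer w w)"
  by (simp add: psd_mat_def transpose_outer outer_mv inner_commute)

lemma trace_outer: "trace (S ** outer w w) = w \<bullet> (S *v w)"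
  by (simp add: trace_def matrix_matrix_mult_def outer_def inner_vec_def matrix_vector_mult_def
      sum_distrib_left mult_ac)


lemma cl_basic:
  assumes "in_class \<sigma> \<psi> M S T P Q w"
  shows "is_distr P" "prob_space P" "sets P = sets borel"
  using assms by (auto simp: in_class_def is_distr_def)

lemma Lb_e: "Lb (\<lambda>z::(real^'d::finite)\<times>real. snd z - fst z \<bullet> w)"
  by (intro Lb_diff Lb_snd Lb_inner)

lemma cl_S:
  fixes S :: "real^'d^'d"
  assumes C: "in_class \<sigma> \<psi> M S T P Q w"
  shows "S $ k $ l = (\<integral>z. fst z $ k * fst z $ l \<partial>P)"
    and "integrable P (\<lambda>z. fst z $ k * fst z $ l)"
proof -
  note D = cl_basic[OF C]
  have ie: "integrable P (\<lambda>z. fst z $ i * fst z $ j)" for i j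
    by (intro int_Q[OF D(1)] Qb_mult Lb_fst meas_P[OF D(3)] continuous_intros)
  thus "integrable P (\<lambda>z. fst z $ k * fst z $ l)" .
  have io: "integrable P (\<lambda>z. outer (fst z) (fst z))"
    by (rule int_mat) (simp add: outer_def ie)
  have "S = (\<integral>z. outer (fst z) (fst z) \<partial>P)" using C by (simp add: in_class_def)
  hence "S $ k $ l = (\<integral>z. outer (fst z) (fst z) $ k $ l \<partial>P)" using mat_entry[OF io] by simp
  thus "S $ k $ l = (\<integral>z. fst z $ k * fst z $ l \<partial>P)" by (simp add: outer_def)
qed

lemma cl_foc:
  fixes S :: "real^'d^'d"
  assumes C: "in_class \<sigma> \<psi> M S T P Q w"
  shows "(\<integral>z. (snd z - fst z \<bullet> w) * fst z $ k \<partial>P) = 0"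
proof -
  note D = cl_basic[OF C]
  define e where "e z = snd z - fst z \<bullet> w" for z :: "(real^'d) \<times> real"
  have i1: "integrable P (\<lambda>z. e z * e z)"
    unfolding e_def by (intro int_Q[OF D(1)] Qb_mult Lb_e meas_P[OF D(3)] continuous_intros)
  have i2: "integrable P (\<lambda>z. e z * fst z $ k)"
    unfolding e_def by (intro int_Q[OF D(1)] Qb_mult Lb_e Lb_fst meas_P[OF D(3)] continuous_intros)
  have i3: "integrable P (\<lambda>z. fst z $ k * fst z $ k)"
    by (intro int_Q[OF D(1)] Qb_mult Lb_fst meas_P[OF D(3)] continuous_intros)
  have "0 \<le> 2 * t * (- (\<integral>z. e z * fst z $ k \<partial>P)) + t^2 * (\<integral>z. fst z $ k * fst z $ k \<partial>P)" for t
  proof -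
    have "risk P w \<le> risk P (w + t *\<^sub>R axis k 1)" using C by (simp add: in_class_def)
    hence "(\<integral>z. (snd z - fst z \<bullet> w)^2 \<partial>P) \<le> (\<integral>z. (snd z - fst z \<bullet> (w + t *\<^sub>R axis k 1))^2 \<partial>P)"
      by (simp add: risk_def)
    moreover have "(\<lambda>z. (snd z - fst z \<bullet> (w + t *\<^sub>R axis k 1))^2) =
        (\<lambda>z. e z * e z + (- 2 * t) * (e z * fst z $ k) + t^2 * (fst z $ k * fst z $ k))"
      by (rule ext) (simp add: e_def inner_add_right inner_axis power2_eq_square algebra_simps)
    moreover have "(\<lambda>z. (snd z - fst z \<bullet> w)^2) = (\<lambda>z. e z * e z)"
      by (rule ext) (simp add: e_def power2_eq_square)
    ultimately have "(\<integral>z. e z * e z \<partial>P) \<le> (\<integral>z. e z * e z + (- 2 * t) * (e z * fst z $ k) + t^2 * (fst z $ k * fst z $ k) \<partial>P)"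
      by simp
    also have "\<dots> = (\<integral>z. e z * e z \<partial>P) + (- 2 * t) * (\<integral>z. e z * fst z $ k \<partial>P) + t^2 * (\<integral>z. fst z $ k * fst z $ k \<partial>P)"
      using i1 i2 i3 by (simp add: Bochner_Integration.integral_add)
    finally show ?thesis by (simp add: algebra_simps)
  qed
  from quad_zero[OF this] show ?thesis unfolding e_def by simp
qed

lemma cl_yx:
  fixes S :: "real^'d^'d"
  assumes C: "in_class \<sigma> \<psi> M S T P Q w"
  shows "(\<integral>z. snd z * fst z $ k \<partial>P) = (S *v w) $ k"
    and "integrable P (\<lambda>z. snd z * fst z $ k)"
proof -
  note D = cl_basic[OF C]
  show "integrable P (\<lambda>z. snd z * fst z $ k)"
    by (intro int_Q[OF D(1)] Qb_mult Lb_snd Lb_fst meas_P[OF D(3)] continuous_intros)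
  have i2: "integrable P (\<lambda>z. (snd z - fst z \<bullet> w) * fst z $ k)"
    by (intro int_Q[OF D(1)] Qb_mult Lb_e Lb_fst meas_P[OF D(3)] continuous_intros)
  have i3: "integrable P (\<lambda>z. w $ l * (fst z $ k * fst z $ l))" for l
    by (intro integrable_mult_right cl_S(2)[OF C])
  have "(\<lambda>z. snd z * fst z $ k) = (\<lambda>z. (snd z - fst z \<bullet> w) * fst z $ k + (\<Sum>l\<in>UNIV. w $ l * (fst z $ k * fst z $ l)))"
    by (rule ext) (simp add: inner_vec_def algebra_simps sum_distrib_left)
  hence "(\<integral>z. snd z * fst z $ k \<partial>P) = (\<integral>z. (snd z - fst z \<bullet> w) * fst z $ k \<partial>P) + (\<Sum>l\<in>UNIV. \<integral>z. w $ l * (fst z $ k * fst z $ l) \<partial>P)"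
    using i2 i3 by (simp add: Bochner_Integration.integral_add Bochner_Integration.integral_sum Bochner_Integration.integrable_sum)
  also have "\<dots> = (\<Sum>l\<in>UNIV. S $ k $ l * w $ l)"
    using cl_foc[OF C, of k] by (simp add: cl_S(1)[OF C] mult.commute)
  finally show "(\<integral>z. snd z * fst z $ k \<partial>P) = (S *v w) $ k" by (simp add: matrix_vector_mult_def)
qed


lemma cl_sig:
  fixes S :: "real^'d^'d"
  assumes C: "in_class \<sigma> \<psi> M S T P Q w"
  shows "(\<integral>z. (snd z - fst z \<bullet> w)^2 * (u \<bullet> fst z)^2 \<partial>P) \<le> \<sigma>^2 * qform S u"
    and "integrable P (\<lambda>z. (snd z - fst z \<bullet> w)^2 * (u \<bullet> fst z)^2)"
proof -
  note D = cl_basic[OF C]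
  define e where "e z = snd z - fst z \<bullet> w" for z :: "(real^'d) \<times> real"
  define F where "F z = (e z)^2 *\<^sub>R outer (fst z) (fst z)" for z
  have ie: "integrable P (\<lambda>z. (e z * fst z $ i) * (e z * fst z $ j))" for i j
    unfolding e_def by (intro int_QQ[OF D(1)] Qb_mult Lb_e Lb_fst meas_P[OF D(3)] continuous_intros)
  have iF: "integrable P F"
  proof (rule int_mat)
    fix i j
    have "(\<lambda>z. F z $ i $ j) = (\<lambda>z. (e z * fst z $ i) * (e z * fst z $ j))"
      by (rule ext) (simp add: F_def outer_def power2_eq_square mult_ac)
    thus "integrable P (\<lambda>z. F z $ i $ j)" using ie by simp
  qed
  have qF: "qform (F z) u = (e z)^2 * (u \<bullet> fst z)^2" for z by (simp add: F_def qform_outer)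
  have Fe: "F = (\<lambda>z. (snd z - fst z \<bullet> w)^2 *\<^sub>R outer (fst z) (fst z))" by (simp add: fun_eq_iff F_def e_def)
  have "loewner_le (integral\<^sup>L P F) (\<sigma>\<^sup>2 *\<^sub>R S)" using C by (simp add: in_class_def Fe)
  hence "qform (integral\<^sup>L P F) u \<le> qform (\<sigma>\<^sup>2 *\<^sub>R S) u" by (simp add: loewner_le_def qform_def)
  moreover have "qform (\<sigma>\<^sup>2 *\<^sub>R S) u = \<sigma>^2 * qform S u"
    by (simp add: qform_def scaleR_matrix_vector_assoc[symmetric])
  ultimately show "(\<integral>z. (snd z - fst z \<bullet> w)^2 * (u \<bullet> fst z)^2 \<partial>P) \<le> \<sigma>^2 * qform S u"
    using qform_int[OF iF, of u] qF by (simp add: e_def)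
  have "integrable P (\<lambda>z. ((snd z - fst z \<bullet> w) * (fst z \<bullet> u)) * ((snd z - fst z \<bullet> w) * (fst z \<bullet> u)))"
    by (intro int_QQ[OF D(1)] Qb_mult Lb_e Lb_inner meas_P[OF D(3)] continuous_intros)
  thus "integrable P (\<lambda>z. (snd z - fst z \<bullet> w)^2 * (u \<bullet> fst z)^2)"
    by (simp add: power2_eq_square inner_commute mult_ac)
qed

lemma cl_psi:
  fixes S :: "real^'d^'d"
  assumes C: "in_class \<sigma> \<psi> M S T P Q w"
  shows "(\<integral>z. (fst z \<bullet> w)^2 * (u \<bullet> fst z)^2 \<partial>P) \<le> \<psi> * (w \<bullet> (S *v w)) * qform S u"
    and "integrable P (\<lambda>z. (fst z \<bullet> w)^2 * (u \<bullet> fst z)^2)"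
proof -
  note D = cl_basic[OF C]
  define F where "F z = (fst z \<bullet> w)^2 *\<^sub>R outer (fst z) (fst z)" for z :: "(real^'d) \<times> real"
  have ie: "integrable P (\<lambda>z. ((fst z \<bullet> w) * fst z $ i) * ((fst z \<bullet> w) * fst z $ j))" for i j
    by (intro int_QQ[OF D(1)] Qb_mult Lb_inner Lb_fst meas_P[OF D(3)] continuous_intros)
  have iF: "integrable P F"
  proof (rule int_mat)
    fix i j
    have "(\<lambda>z. F z $ i $ j) = (\<lambda>z. ((fst z \<bullet> w) * fst z $ i) * ((fst z \<bullet> w) * fst z $ j))"
      by (rule ext) (simp add: F_def outer_def power2_eq_square mult_ac)
    thus "integrable P (\<lambda>z. F z $ i $ j)" using ie by simp
  qed
  have qF: "qform (F z) u = (fst z \<bullet> w)^2 * (u \<bullet> fst z)^2" for z by (simp add: F_def qform_outer)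
  have "loewner_le (\<integral>z. outer (fst z) (fst z) ** outer w w ** outer (fst z) (fst z) \<partial>P)
                   ((\<psi> * trace (S ** outer w w)) *\<^sub>R S)" using C psd_outer[of w] by (simp add: in_class_def)
  hence "loewner_le (integral\<^sup>L P F) ((\<psi> * (w \<bullet> (S *v w))) *\<^sub>R S)"
    by (simp add: outer3 trace_outer fun_eq_iff F_def[abs_def])
  hence "qform (integral\<^sup>L P F) u \<le> qform ((\<psi> * (w \<bullet> (S *v w))) *\<^sub>R S) u" by (simp add: loewner_le_def qform_def)
  moreover have "qform ((\<psi> * (w \<bullet> (S *v w))) *\<^sub>R S) u = \<psi> * (w \<bullet> (S *v w)) * qform S u"
    by (simp add: qform_def scaleR_matrix_vector_assoc[symmetric])
  ultimately show "(\<integral>z. (fst z \<bullet> w)^2 * (u \<bullet> fst z)^2 \<partial>P) \<le> \<psi> * (w \<bullet> (S *v w)) * qform S u"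
    using qform_int[OF iF, of u] qF by simp
  have "integrable P (\<lambda>z. ((fst z \<bullet> w) * (fst z \<bullet> u)) * ((fst z \<bullet> w) * (fst z \<bullet> u)))"
    by (intro int_QQ[OF D(1)] Qb_mult Lb_inner meas_P[OF D(3)] continuous_intros)
  thus "integrable P (\<lambda>z. (fst z \<bullet> w)^2 * (u \<bullet> fst z)^2)"
    by (simp add: power2_eq_square inner_commute mult_ac)
qed


lemma trace_sum': "finite B \<Longrightarrow> trace (\<Sum>v\<in>B. f v) = (\<Sum>v\<in>B. trace (f v :: real^'n^'n))"
  by (simp add: trace_def sum_component sum.swap[of _ UNIV B])

lemma trace_scale: "trace (c *\<^sub>R (A::real^'n^'n)) = c * trace A"
  by (simp add: trace_def sum_distrib_left)

lemma mul_sum: "finite B \<Longrightarrow> (S::real^'n^'n) ** (\<Sum>v\<in>B. f v) = (\<Sum>v\<in>B. S ** f v)"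
  by (induction B rule: finite_induct) (auto simp: matrix_add_ldistrib)

lemma eig_matrix:
  fixes K :: "real^'n^'n"
  assumes sym: "transpose K = K" and E: "eigsys K B" and X: "\<forall>x. x = (\<Sum>v\<in>B. (v \<bullet> x) *\<^sub>R v)"
  shows "K = (\<Sum>v\<in>B. (v \<bullet> (K *v v)) *\<^sub>R outer v v)"
proof -
  have fin: "finite B" using E by (simp add: eigsys_def)
  have hx: "K *v x = (\<Sum>v\<in>B. (v \<bullet> (K *v v)) *\<^sub>R outer v v) *v x" for x
  proof -
    have "K *v x = (\<Sum>v\<in>B. ((v \<bullet> (K *v v)) * (v \<bullet> x)) *\<^sub>R v)" by (rule eig_apply[OF sym E X])
    also have "\<dots> = (\<Sum>v\<in>B. (v \<bullet> (K *v v)) *\<^sub>R outer v v) *v x"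
      unfolding sum_mv[OF fin]
      by (intro sum.cong refl) (simp add: scaleR_matrix_vector_assoc[symmetric] outer_mv)
    finally show ?thesis .
  qed
  show ?thesis by (rule iffD2[OF matrix_eq]) (use hx in blast)
qed

lemma var_bound:
  fixes S K :: "real^'d^'d"
  assumes C: "in_class \<sigma> \<psi> M S T P Q w" and K: "psd_mat K" and Sp: "psd_mat S"
  shows "(\<integral>z. (snd z)^2 * qform K (fst z) \<partial>P)
           \<le> (2 * \<sigma>^2 + 2 * \<psi> * (w \<bullet> (S *v w))) * trace (S ** K)"
    and "integrable P (\<lambda>z. (snd z)^2 * qform K (fst z))"
    and "trace (S ** K) \<ge> 0"
proof -
  note D = cl_basic[OF C]
  have sym: "transpose K = K" using K by (simp add: psd_mat_def)
  obtain B where E: "eigsys K B" and X: "\<forall>x. x = (\<Sum>v\<in>B. (v \<bullet> x) *\<^sub>R v)"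
    using spectral[OF sym] by blast
  have fin: "finite B" using E by (simp add: eigsys_def)
  define lam where "lam v = v \<bullet> (K *v v)" for v
  have lam0: "lam v \<ge> 0" for v using K by (simp add: lam_def psd_mat_def)
  have iv: "integrable P (\<lambda>z. (snd z)^2 * (v \<bullet> fst z)^2)" for v
  proof -
    have "integrable P (\<lambda>z. (snd z * (fst z \<bullet> v)) * (snd z * (fst z \<bullet> v)))"
      by (intro int_QQ[OF D(1)] Qb_mult Lb_snd Lb_inner meas_P[OF D(3)] continuous_intros)
    thus ?thesis by (simp add: power2_eq_square inner_commute mult_ac)
  qed
  have qK0: "qform K x = (\<Sum>v\<in>B. lam v * (v \<bullet> x)^2)" for x
    unfolding qform_def lam_def by (rule eig_quad[OF sym E X])
  have qK: "(snd z)^2 * qform K (fst z) = (\<Sum>v\<in>B. lam v * ((snd z)^2 * (v \<bullet> fst z)^2))" for z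
    unfolding qK0 by (simp add: sum_distrib_left mult_ac)
  show int: "integrable P (\<lambda>z. (snd z)^2 * qform K (fst z))"
    unfolding qK by (intro Bochner_Integration.integrable_sum integrable_mult_right iv)
  have bnd: "(\<integral>z. (snd z)^2 * (v \<bullet> fst z)^2 \<partial>P) \<le> (2 * \<sigma>^2 + 2 * \<psi> * (w \<bullet> (S *v w))) * qform S v" for v
  proof -
    have "(\<integral>z. (snd z)^2 * (v \<bullet> fst z)^2 \<partial>P) \<le>
          (\<integral>z. 2 * ((snd z - fst z \<bullet> w)^2 * (v \<bullet> fst z)^2) + 2 * ((fst z \<bullet> w)^2 * (v \<bullet> fst z)^2) \<partial>P)"
    proof (rule integral_mono)
      show "integrable P (\<lambda>z. (snd z)^2 * (v \<bullet> fst z)^2)" by (rule iv)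
      show "integrable P (\<lambda>z. 2 * ((snd z - fst z \<bullet> w)^2 * (v \<bullet> fst z)^2) + 2 * ((fst z \<bullet> w)^2 * (v \<bullet> fst z)^2))"
        by (intro Bochner_Integration.integrable_add integrable_mult_right cl_sig(2)[OF C] cl_psi(2)[OF C])
      fix z
      have "(snd z)^2 \<le> 2 * (snd z - fst z \<bullet> w)^2 + 2 * (fst z \<bullet> w)^2"
      proof -
        have "0 \<le> (snd z - 2 * (fst z \<bullet> w))^2" by simp
        thus ?thesis by (simp add: power2_eq_square algebra_simps)
      qed
      hence "(snd z)^2 * (v \<bullet> fst z)^2 \<le> (2 * (snd z - fst z \<bullet> w)^2 + 2 * (fst z \<bullet> w)^2) * (v \<bullet> fst z)^2"
        by (intro mult_right_mono) auto
      thus "(snd z)^2 * (v \<bullet> fst z)^2 \<le> 2 * ((snd z - fst z \<bullet> w)^2 * (v \<bullet> fst z)^2) + 2 * ((fst z \<bullet> w)^2 * (v \<bullet> fst z)^2)"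
        by (simp add: algebra_simps)
    qed
    also have "\<dots> = 2 * (\<integral>z. (snd z - fst z \<bullet> w)^2 * (v \<bullet> fst z)^2 \<partial>P) + 2 * (\<integral>z. (fst z \<bullet> w)^2 * (v \<bullet> fst z)^2 \<partial>P)"
      using cl_sig(2)[OF C, of v] cl_psi(2)[OF C, of v] by (simp add: Bochner_Integration.integral_add)
    also have "\<dots> \<le> 2 * (\<sigma>^2 * qform S v) + 2 * (\<psi> * (w \<bullet> (S *v w)) * qform S v)"
      using cl_sig(1)[OF C, of v] cl_psi(1)[OF C, of v] by linarith
    finally show ?thesis by (simp add: algebra_simps)
  qed
  have tr: "trace (S ** K) = (\<Sum>v\<in>B. lam v * qform S v)"
  proof -
    have K2: "K = (\<Sum>v\<in>B. lam v *\<^sub>R outer v v)" unfolding lam_def by (rule eig_matrix[OF sym E X])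
    have "S ** K = (\<Sum>v\<in>B. lam v *\<^sub>R (S ** outer v v))"
      by (subst K2) (simp add: mul_sum[OF fin] matrix_scalar_ac scalar_matrix_assoc)
    thus ?thesis by (simp add: trace_sum'[OF fin] trace_scale trace_outer qform_def)
  qed
  have "(\<integral>z. (snd z)^2 * qform K (fst z) \<partial>P) = (\<Sum>v\<in>B. lam v * (\<integral>z. (snd z)^2 * (v \<bullet> fst z)^2 \<partial>P))"
    unfolding qK by (simp add: Bochner_Integration.integral_sum integrable_mult_right iv)
  also have "\<dots> \<le> (\<Sum>v\<in>B. lam v * ((2 * \<sigma>^2 + 2 * \<psi> * (w \<bullet> (S *v w))) * qform S v))"
    by (intro sum_mono mult_left_mono bnd lam0)
  also have "\<dots> = (2 * \<sigma>^2 + 2 * \<psi> * (w \<bullet> (S *v w))) * trace (S ** K)"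
    unfolding tr by (simp add: sum_distrib_left sum_distrib_right mult_ac)
  finally show "(\<integral>z. (snd z)^2 * qform K (fst z) \<partial>P) \<le> (2 * \<sigma>^2 + 2 * \<psi> * (w \<bullet> (S *v w))) * trace (S ** K)" .
  show "trace (S ** K) \<ge> 0"
    unfolding tr using Sp lam0 by (auto simp: psd_mat_def qform_def intro!: sum_nonneg mult_nonneg_nonneg)
qed

lemma mv_sum: "finite I \<Longrightarrow> (A::real^'n^'m) *v (\<Sum>i\<in>I. f i) = (\<Sum>i\<in>I. A *v f i)"
  by (induction I rule: finite_induct) (auto simp: matrix_vector_right_distrib)

lemma qform_scale: "qform T (c *\<^sub>R v) = c^2 * qform T v"
  by (simp add: qform_def matrix_vector_mult_scaleR power2_eq_square)

lemma qform_neg: "qform T (- v) = qform T v"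
  using qform_scale[of T "-1" v] by simp

lemma qform_nonneg: "psd_mat T \<Longrightarrow> qform T v \<ge> 0"
  by (simp add: psd_mat_def qform_def)

lemma pd_psd: "pd_mat A \<Longrightarrow> psd_mat A"
  unfolding pd_mat_def psd_mat_def by (metis inner_zero_left matrix_vector_mult_0_right order_le_less)

lemma west_eq:
  assumes "n \<ge> 1"
  shows "west n M S A \<omega> - w = (1 / real n) *\<^sub>R (\<Sum>i<n. snd (\<omega> i) *\<^sub>R ((matrix_inv (msqrt M) ** A ** msqrt M ** matrix_inv S) *v fst (\<omega> i)) - w)"
proof -
  let ?C = "matrix_inv (msqrt M) ** A ** msqrt M ** matrix_inv S"
  have "west n M S A \<omega> = (1 / real n) *\<^sub>R (\<Sum>i<n. snd (\<omega> i) *\<^sub>R (?C *v fst (\<omega> i)))"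
    unfolding west_def by (simp add: mv_sum matrix_vector_mult_scaleR)
  moreover have "(1 / real n) *\<^sub>R (\<Sum>i<n. snd (\<omega> i) *\<^sub>R (?C *v fst (\<omega> i)) - w)
      = (1 / real n) *\<^sub>R (\<Sum>i<n. snd (\<omega> i) *\<^sub>R (?C *v fst (\<omega> i))) - w"
    using assms by (simp add: sum_subtractf scaleR_diff_right sum_constant_scaleR del: sum_constant)
  ultimately show ?thesis by simp
qed


lemma main_bound:
  fixes M S T A :: "real^'d^'d"
  assumes n: "n \<ge> 1" and sig: "\<sigma> > 0" and psi: "\<psi> \<ge> 1"
    and pM: "pd_mat M" and pS: "pd_mat S" and pT: "psd_mat T"
    and C: "in_class \<sigma> \<psi> M S T P Q w"
  shows "(\<integral>\<^sup>+\<omega>. ennreal (qform T (west n M S A \<omega> - w)) \<partial>(PiM {..<n} (\<lambda>_. P)))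
              \<le> ennreal (Jfun n \<sigma> \<psi> M S T A)"
proof -
  note D = cl_basic[OF C]
  interpret PS: prob_space P by (rule D(2))
  have ic: "integrable P (\<lambda>z. c :: real)" for c by simp
  define R where "R = msqrt M"
  define Mi where "Mi = matrix_inv R"
  define Si where "Si = matrix_inv S"
  have Rp: "psd_mat R" and RR: "R ** R = M" using msqrt_props[OF pd_psd[OF pM]] by (auto simp: R_def)
  have invR: "invertible R"
  proof (rule ker_invertible)
    fix x assume "R *v x = 0"
    hence "M *v x = 0" by (metis RR matrix_vector_mul_assoc matrix_vector_mult_0_right)
    thus "x = 0" using pM by (metis pd_mat_def inner_zero_right less_irrefl)
  qed
  have sR: "transpose R = R" using Rp by (simp add: psd_mat_def)
  have RMi: "R ** Mi = mat 1" and MiR: "Mi ** R = mat 1" using inv_props[OF invR] by (auto simp: Mi_def)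
  have sMi: "transpose Mi = Mi" unfolding Mi_def by (rule sym_inv[OF invR sR])
  have invS: "invertible S" by (rule pd_invertible[OF pS])
  have sS: "transpose S = S" using pS by (simp add: pd_mat_def)
  have SSi: "S ** Si = mat 1" and SiS: "Si ** S = mat 1" using inv_props[OF invS] by (auto simp: Si_def)
  have sSi: "transpose Si = Si" unfolding Si_def by (rule sym_inv[OF invS sS])
  have sT: "transpose T = T" using pT by (simp add: psd_mat_def)
  interpret AC: algctx R Mi S Si T
    by unfold_locales (fact RMi MiR SSi SiS sR sMi sS sSi sT)+
  define Cm where "Cm = Mi ** A ** R ** Si"
  define H where "H z = snd z *\<^sub>R (Cm *v fst z)" for z :: "(real^'d) \<times> real"
  define G where "G z = H z - w" for z
  define Pi where "Pi = PiM {..<n} (\<lambda>_. P)"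
  have Hc: "H z $ a = snd z * (Cm *v fst z) $ a" for z a by (simp add: H_def)
  have QbH: "Qb (\<lambda>z. H z $ a)" for a unfolding Hc by (intro Qb_mult Lb_snd Lb_mv)
  have QbG: "Qb (\<lambda>z. G z $ a)" for a unfolding G_def using QbH[of a] by (simp add: Qb_diff Qb_const)
  have mH: "(\<lambda>z. H z $ a) \<in> borel_measurable P" for a
    unfolding Hc by (intro meas_P[OF D(3)] continuous_intros)
  have mHH: "(\<lambda>z. H z $ a * H z $ b) \<in> borel_measurable P" for a b
    unfolding Hc by (intro meas_P[OF D(3)] continuous_intros)
  have iH: "integrable P (\<lambda>z. H z $ a)" for a by (rule int_Q[OF D(1) QbH mH])
  have iHH: "integrable P (\<lambda>z. H z $ a * H z $ b)" for a b by (rule int_QQ[OF D(1) QbH QbH mHH])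
  have iG: "integrable P (\<lambda>z. G z $ a)" for a
    unfolding G_def using iH[of a] ic by (simp add: Bochner_Integration.integrable_diff)
  have iGG: "integrable P (\<lambda>z. G z $ a * G z $ b)" for a b
  proof -
    have "(\<lambda>z. G z $ a * G z $ b) = (\<lambda>z. H z $ a * H z $ b + (- w $ b) * H z $ a + (- w $ a) * H z $ b + w $ a * w $ b)"
      by (rule ext) (simp add: G_def algebra_simps)
    thus ?thesis using iHH iH ic
      by (simp add: Bochner_Integration.integrable_add integrable_mult_right)
  qed
  define mh where "mh a = (\<integral>z. H z $ a \<partial>P)" for a
  define m where "m a = (\<integral>z. G z $ a \<partial>P)" for a
  have m_mh: "m a = mh a - w $ a" for a
    unfolding m_def mh_def G_def using iH[of a] D(2) by (simp add: prob_space.prob_space)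
  have GG: "(\<integral>z. G z $ a * G z $ b \<partial>P) - m a * m b = (\<integral>z. H z $ a * H z $ b \<partial>P) - mh a * mh b" for a b
  proof -
    have "(\<lambda>z. G z $ a * G z $ b) = (\<lambda>z. H z $ a * H z $ b + (- w $ b) * H z $ a + (- w $ a) * H z $ b + w $ a * w $ b)"
      by (rule ext) (simp add: G_def algebra_simps)
    hence "(\<integral>z. G z $ a * G z $ b \<partial>P) = (\<integral>z. H z $ a * H z $ b \<partial>P) - w $ b * mh a - w $ a * mh b + w $ a * w $ b"
      using iHH iH D(2) by (simp add: mh_def prob_space.prob_space)
    thus ?thesis unfolding m_mh by (simp add: algebra_simps)
  qed
  have mh_eq: "mh a = (Cm *v (S *v w)) $ a" for a
  proof -
    have "(\<lambda>z. H z $ a) = (\<lambda>z. \<Sum>k\<in>UNIV. Cm $ a $ k * (snd z * fst z $ k))"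
      by (rule ext) (simp add: Hc matrix_vector_mult_def sum_distrib_left mult_ac)
    hence "mh a = (\<Sum>k\<in>UNIV. Cm $ a $ k * (\<integral>z. snd z * fst z $ k \<partial>P))"
      unfolding mh_def using cl_yx(2)[OF C]
      by (simp add: Bochner_Integration.integral_sum integrable_mult_right)
    thus ?thesis by (simp add: cl_yx(1)[OF C] matrix_vector_mult_def)
  qed
  define mv where "mv = Cm *v (S *v w) - w"
  have m_mv: "m a = mv $ a" for a by (simp add: m_mh mh_eq mv_def)
  have weq: "west n M S A \<omega> - w = (1 / real n) *\<^sub>R (\<Sum>i<n. G (\<omega> i))" for \<omega>
    unfolding west_eq[OF n] G_def H_def Cm_def R_def Mi_def Si_def by simp
  note PQ = Pi_quad[OF D(2) n iG iGG, of T]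
  have intW: "integrable Pi (\<lambda>\<omega>. qform T (west n M S A \<omega> - w))"
    using PQ(1) unfolding Pi_def weq .
  have EW: "(\<integral>\<omega>. qform T (west n M S A \<omega> - w) \<partial>Pi) =
      qform T mv + (1 / real n) * (\<Sum>a\<in>UNIV. \<Sum>b\<in>UNIV. T $ a $ b * ((\<integral>z. H z $ a * H z $ b \<partial>P) - mh a * mh b))"
  proof -
    have GG': "(\<integral>z. G z $ a * G z $ b \<partial>P) - mv $ a * mv $ b = (\<integral>z. H z $ a * H z $ b \<partial>P) - mh a * mh b" for a b
      using GG[of a b] by (simp add: m_mv)
    show ?thesis
      using PQ(2) unfolding Pi_def[symmetric] weq m_def[symmetric] m_mv GG' qform_expand[of T mv] by simp
  qed
  define IA where "IA = mat 1 - A"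
  define u where "u = R *v w"
  have u1: "norm u \<le> 1"
  proof -
    have "u \<bullet> u = w \<bullet> (M *v w)" unfolding u_def AC.f5 RR ..
    also have "\<dots> \<le> 1" using C by (simp add: in_class_def ballW_def)
    finally show ?thesis by (simp add: norm_eq_sqrt_inner)
  qed
  define T' where "T' = Mi ** T ** Mi"
  define S' where "S' = Mi ** S ** Mi"
  define Qm where "Qm = transpose IA ** T' ** IA"
  have bias: "qform T mv \<le> spec_norm Qm"
  proof -
    have "mv = - ((Mi ** IA) *v u)" unfolding mv_def Cm_def IA_def u_def by (rule AC.f1)
    hence "qform T mv = u \<bullet> (Qm *v u)" unfolding Qm_def T'_def IA_def by (simp add: qform_neg AC.f2)
    also have "\<dots> \<le> spec_norm Qm" by (rule quad_le_spec[OF u1])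
    finally show ?thesis .
  qed
  define K where "K = transpose Cm ** T ** Cm"
  have qHK: "qform T (H z) = (snd z)^2 * qform K (fst z)" for z
    unfolding H_def K_def by (simp add: qform_scale qform_mult[OF sT])
  have Kp: "psd_mat K"
  proof -
    have "transpose K = K" unfolding K_def by (simp add: matrix_transpose_mul sT matrix_mul_assoc)
    moreover have "0 \<le> x \<bullet> (K *v x)" for x
    proof -
      have "qform K x = qform T (Cm *v x)" unfolding K_def by (rule qform_mult[OF sT, symmetric])
      thus ?thesis using qform_nonneg[OF pT, of "Cm *v x"] by (simp add: qform_def)
    qed
    ultimately show ?thesis by (simp add: psd_mat_def)
  qed
  note VB = var_bound[OF C Kp pd_psd[OF pS]]
  define mhv where "mhv = (\<chi> a. mh a)"
  have iTH: "integrable P (\<lambda>z. T $ a $ b * (H z $ a * H z $ b))" for a b by (intro integrable_mult_right iHH)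
  have V1: "(\<Sum>a\<in>UNIV. \<Sum>b\<in>UNIV. T $ a $ b * ((\<integral>z. H z $ a * H z $ b \<partial>P) - mh a * mh b))
      = (\<integral>z. qform T (H z) \<partial>P) - qform T mhv"
  proof -
    have "(\<integral>z. qform T (H z) \<partial>P) = (\<Sum>a\<in>UNIV. \<Sum>b\<in>UNIV. (\<integral>z. T $ a $ b * (H z $ a * H z $ b) \<partial>P))"
    proof -
      have "(\<integral>z. qform T (H z) \<partial>P) = (\<Sum>a\<in>UNIV. (\<integral>z. (\<Sum>b\<in>UNIV. T $ a $ b * (H z $ a * H z $ b)) \<partial>P))"
        unfolding qform_expand
        by (rule Bochner_Integration.integral_sum, rule Bochner_Integration.integrable_sum, rule iTH)
      also have "\<dots> = (\<Sum>a\<in>UNIV. \<Sum>b\<in>UNIV. (\<integral>z. T $ a $ b * (H z $ a * H z $ b) \<partial>P))"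
        by (rule sum.cong[OF refl], rule Bochner_Integration.integral_sum, rule iTH)
      finally show ?thesis .
    qed
    thus ?thesis by (simp add: qform_expand mhv_def right_diff_distrib sum_subtractf)
  qed
  have V2: "(\<integral>z. qform T (H z) \<partial>P) \<le> (2 * \<sigma>^2 + 2 * \<psi> * (w \<bullet> (S *v w))) * trace (S ** K)"
    using VB(1) by (simp add: qHK)
  have tr0: "trace (S ** K) \<ge> 0" by (rule VB(3))
  have s_le: "w \<bullet> (S *v w) \<le> spec_norm S'"
    unfolding AC.f4 S'_def u_def[symmetric] by (rule quad_le_spec[OF u1])
  have invS': "invertible S'" unfolding S'_def invertible_def using AC.f6 AC.f7 by blast
  have iS': "matrix_inv S' = R ** Si ** R" unfolding S'_def by (rule inv_unique[OF invS'[unfolded S'_def] AC.f6])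
  have trF: "trace (S ** K) = frob_inner T' (A ** matrix_inv S' ** transpose A)"
    unfolding frob_inner_def iS' K_def Cm_def T'_def AC.f8 by (rule AC.f3)
  have Jeq: "Jfun n \<sigma> \<psi> M S T A = spec_norm Qm + (2 * \<sigma>\<^sup>2 + 2 * \<psi> * spec_norm S') / real n * frob_inner T' (A ** matrix_inv S' ** transpose A)"
    unfolding Jfun_def Let_def Qm_def T'_def S'_def IA_def Mi_def R_def ..
  have nn: "real n > 0" using n by simp
  have "(\<integral>\<omega>. qform T (west n M S A \<omega> - w) \<partial>Pi) \<le> Jfun n \<sigma> \<psi> M S T A"
  proof -
    have "(\<integral>\<omega>. qform T (west n M S A \<omega> - w) \<partial>Pi) \<le> spec_norm Qm + (1 / real n) * ((2 * \<sigma>^2 + 2 * \<psi> * (w \<bullet> (S *v w))) * trace (S ** K))"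
    proof -
      have "qform T mhv \<ge> 0" by (rule qform_nonneg[OF pT])
      hence "(\<Sum>a\<in>UNIV. \<Sum>b\<in>UNIV. T $ a $ b * ((\<integral>z. H z $ a * H z $ b \<partial>P) - mh a * mh b))
          \<le> (2 * \<sigma>^2 + 2 * \<psi> * (w \<bullet> (S *v w))) * trace (S ** K)" unfolding V1 using V2 by linarith
      hence "(1 / real n) * (\<Sum>a\<in>UNIV. \<Sum>b\<in>UNIV. T $ a $ b * ((\<integral>z. H z $ a * H z $ b \<partial>P) - mh a * mh b))
          \<le> (1 / real n) * ((2 * \<sigma>^2 + 2 * \<psi> * (w \<bullet> (S *v w))) * trace (S ** K))"
        using nn by (intro mult_left_mono) auto
      thus ?thesis unfolding EW using bias by linarith
    qed
    also have "(2 * \<sigma>^2 + 2 * \<psi> * (w \<bullet> (S *v w))) * trace (S ** K) \<le> (2 * \<sigma>^2 + 2 * \<psi> * spec_norm S') * trace (S ** K)"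
      using s_le psi tr0 by (intro mult_right_mono) auto
    hence "spec_norm Qm + (1 / real n) * ((2 * \<sigma>^2 + 2 * \<psi> * (w \<bullet> (S *v w))) * trace (S ** K))
        \<le> spec_norm Qm + (1 / real n) * ((2 * \<sigma>^2 + 2 * \<psi> * spec_norm S') * trace (S ** K))"
      using nn by (intro add_left_mono mult_left_mono) auto
    also have "\<dots> = Jfun n \<sigma> \<psi> M S T A" unfolding Jeq trF by simp
    finally show ?thesis .
  qed
  moreover have "(\<integral>\<^sup>+\<omega>. ennreal (qform T (west n M S A \<omega> - w)) \<partial>Pi) = ennreal (\<integral>\<omega>. qform T (west n M S A \<omega> - w) \<partial>Pi)"
    by (rule nn_integral_eq_integral[OF intW]) (simp add: qform_nonneg[OF pT])
  ultimately show ?thesis unfolding Pi_def by (simp add: ennreal_leI)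
qed

theorem theorem2:
  fixes n :: nat and \<sigma> \<psi> :: real and M S T :: "real^'d^'d"
  assumes "n \<ge> 1" and "\<sigma> > 0" and "\<psi> \<ge> 1"
    and "pd_mat M" and "pd_mat S" and "psd_mat T"
  shows "(\<forall>A P Q wstar. in_class \<sigma> \<psi> M S T P Q wstar \<longrightarrow>
            (\<integral>\<^sup>+\<omega>. ennreal (qform T (west n M S A \<omega> - wstar)) \<partial>(PiM {..<n} (\<lambda>_. P)))
              \<le> ennreal (Jfun n \<sigma> \<psi> M S T A))
       \<and> (\<forall>Astar. (\<forall>A. Jfun n \<sigma> \<psi> M S T Astar \<le> Jfun n \<sigma> \<psi> M S T A) \<longrightarrow>
            (\<forall>P Q wstar. in_class \<sigma> \<psi> M S T P Q wstar \<longrightarrow>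
               (\<integral>\<^sup>+\<omega>. ennreal (qform T (west n M S Astar \<omega> - wstar)) \<partial>(PiM {..<n} (\<lambda>_. P)))
                 \<le> ennreal (Jfun n \<sigma> \<psi> M S T Astar)))"
  using main_bound[OF assms] by blast

end
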